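(* Let $R\in\{\mathbb Z,\mathbb Z_2\}$, let $K$ be an $(n-1)$-dimensional star-shaped simplicial sphere on $[m]$, let $\lambda_1,\lambda_2$ be R-characteristic maps over $K$ (regarded as $n\times m$ matrices) and let $v\in[m]$. Then $\lambda_1$ and $\lambda_2$ are joined by an edge colored $v$ in the pre-diagram $D'(K)$ if and only if $\operatorname{Pr}(\lambda_1,v)$ and $\operatorname{Pr}(\lambda_2,v)$ coincide up to left multiplication by an element of $GL_{n-1}(R)$.
   Context: An $R$-basis of $R^n$ is a $\mathbb Z$-basis of $\mathbb Z^n$ ($R=\mathbb Z$) or a basis of $\mathbb Z_2^n$ ($R=\mathbb Z_2$). An $R$-characteristic map over a simplicial complex $L$ with $(n-1)$-dimensional facets is a map $\lambda$ from the vertex set to $R^n$ such that the images of the vertices of each $(n-1)$-face form an $R$-basis; it is written as the $n\times m$ matrix of its column vectors. Two characteristic maps are D-J equivalent if one is obtained from the other by left multiplication by an element of $GL_n(R)$ (row operations). For a face $\sigma$ of $L$ and a characteristic map $\lambda$, the projection $\operatorname{proj}_\sigma\lambda$ is the characteristic map on $\operatorname{link}_L\sigma$ given by $w\mapsto[\lambda(w)]\in R^n/\langle\lambda(u):u\in\sigma\rangle\cong R^{n-|\sigma|}$, well defined up to D-J equivalence. The wedge $\operatorname{wed}_vK=(I\star\operatorname{link}_K\{v\})\cup(\partial I\star(K\setminus\{v\}))$, where $I$ is a $1$-simplex on new vertices $v_1,v_2$ replacing $v$; for $a\ne b$ in $\{1,2\}$, $\operatorname{link}_{\operatorname{wed}_vK}\{v_a\}$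 is identified with $K$ via $v_b\mapsto v$ and $i\mapsto i$ for $i\ne v$. The pre-diagram $D'(K)$ is the edge-colored multigraph (loops allowed) whose vertices are the D-J classes of $R$-characteristic maps over $K$, and which has an edge colored $v$ between classes $\lambda_1,\lambda_2$ iff there exists an $R$-characteristic map $\Lambda$ over $\operatorname{wed}_vK$ with $\operatorname{proj}_{v_1}\Lambda=\lambda_1$ and $\operatorname{proj}_{v_2}\Lambda=\lambda_2$ (up to D-J equivalence, via the identifications above). For an $R$-characteristic map $\lambda$ over $K$ and $v\in[m]$, choose $g\in GL_n(R)$ such that the $v$-th column of $g\lambda$ is the first standard basis vector $e_1$; then $\operatorname{Pr}(\lambda,v)$ is the $(n-1)\times(m-1)$ matrix obtained from $g\lambda$ by deleting the first row and the $v$-th column (well defined up to left multiplication by $GL_{n-1}(R)$). *)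

theory Defs
  imports "HOL-Analysis.Analysis" "HOL-Library.Z2" "Jordan_Normal_Form.Matrix"
begin

(* Vertex set [m] is represented as {0..<m}; vertex i corresponds to column i. *)

definition simplicial_complex_on :: "nat \<Rightarrow> nat set set \<Rightarrow> bool" where
  "simplicial_complex_on m K \<longleftrightarrow>
     (\<forall>\<sigma>\<in>K. \<sigma> \<subseteq> {..<m}) \<and> (\<forall>\<sigma>\<in>K. \<forall>\<tau>. \<tau> \<subseteq> \<sigma> \<longrightarrow> \<tau> \<in> K) \<and> (\<forall>i<m. {i} \<in> K)"

definition link :: "nat set set \<Rightarrow> nat set \<Rightarrow> nat set set" where
  "link K \<sigma> = {\<tau> \<in> K. \<tau> \<inter> \<sigma> = {} \<and> \<tau> \<union> \<sigma> \<in> K}"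

definition geom_realization :: "nat set set \<Rightarrow> (nat \<Rightarrow> 'e::euclidean_space) \<Rightarrow> bool" where
  "geom_realization K x \<longleftrightarrow>
     (\<forall>\<sigma>\<in>K. inj_on x \<sigma> \<and> \<not> affine_dependent (x ` \<sigma>)) \<and>
     (\<forall>\<sigma>\<in>K. \<forall>\<tau>\<in>K. convex hull (x ` \<sigma>) \<inter> convex hull (x ` \<tau>) = convex hull (x ` (\<sigma> \<inter> \<tau>)))"

definition polyhedron :: "nat set set \<Rightarrow> (nat \<Rightarrow> 'e::euclidean_space) \<Rightarrow> 'e set" where
  "polyhedron K x = (\<Union>\<sigma>\<in>K. convex hull (x ` \<sigma>))"

(* K is a (DIM('e)-1)-dimensional star-shaped simplicial sphere on [m]:
   a simplicial complex on [m] whose polyhedron is homeomorphic to S^{DIM('e)-1},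
   having a geometric realization in R^{DIM('e)} and a point p such that every ray
   from p meets |K| in exactly one point. *)
definition star_shaped_sphere :: "'e::euclidean_space itself \<Rightarrow> nat \<Rightarrow> nat set set \<Rightarrow> bool" where
  "star_shaped_sphere T m K \<longleftrightarrow> simplicial_complex_on m K \<and>
     (\<exists>x::nat \<Rightarrow> 'e. geom_realization K x \<and> polyhedron K x homeomorphic sphere (0::'e) 1) \<and>
     (\<exists>(x::nat \<Rightarrow> 'e) p. geom_realization K x \<and>
        (\<forall>d. d \<noteq> 0 \<longrightarrow> card ({p + t *\<^sub>R d | t. t \<ge> 0} \<inter> polyhedron K x) = 1))"

definition R_basis :: "nat \<Rightarrow> (nat \<Rightarrow> 'a::comm_ring_1 Matrix.vec) \<Rightarrow> nat set \<Rightarrow> bool" where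
  "R_basis n f S \<longleftrightarrow> finite S \<and> (\<forall>i\<in>S. f i \<in> carrier_vec n) \<and>
     (\<forall>y\<in>carrier_vec n. \<exists>!c::nat \<Rightarrow> 'a. (\<forall>i. i \<notin> S \<longrightarrow> c i = 0) \<and>
        (\<forall>k<n. y $ k = (\<Sum>i\<in>S. c i * f i $ k)))"

definition char_map :: "nat \<Rightarrow> nat \<Rightarrow> nat set set \<Rightarrow> 'a::comm_ring_1 mat \<Rightarrow> bool" where
  "char_map n m L l \<longleftrightarrow> l \<in> carrier_mat n m \<and>
     (\<forall>\<sigma>\<in>L. card \<sigma> = n \<longrightarrow> R_basis n (col l) \<sigma>)"

definition DJ_equiv :: "nat \<Rightarrow> 'a::comm_ring_1 mat \<Rightarrow> 'a mat \<Rightarrow> bool" where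
  "DJ_equiv n A B \<longleftrightarrow> A \<in> carrier_mat n (dim_col A) \<and>
     (\<exists>g\<in>carrier_mat n n. invertible_mat g \<and> g * A = B)"

(* wedge of K at v: v_1 is v itself, v_2 is the new vertex m *)
definition wedge :: "nat set set \<Rightarrow> nat \<Rightarrow> nat \<Rightarrow> nat set set" where
  "wedge K v m =
     {\<sigma> \<union> \<tau> | \<sigma> \<tau>. \<sigma> \<subseteq> {v, m} \<and> \<tau> \<in> link K {v}} \<union>
     {\<sigma> \<union> \<tau> | \<sigma> \<tau>. \<sigma> \<in> {{}, {v}, {m}} \<and> \<tau> \<in> K \<and> v \<notin> \<tau>}"

(* mu is (a representative of) proj_{u} Lam, an (N-1) x (M-1) matrix, where column j of mu
   corresponds to the vertex r j of the link: w \<mapsto> [Lam(w)] in R^N / <Lam(u)> \<cong> R^(N-1),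
   the identification being given by a surjective linear map F with kernel <Lam(u)>. *)
definition is_proj :: "nat \<Rightarrow> nat \<Rightarrow> 'a::comm_ring_1 mat \<Rightarrow> nat \<Rightarrow> (nat \<Rightarrow> nat) \<Rightarrow> 'a mat \<Rightarrow> bool" where
  "is_proj N M Lam u r mu \<longleftrightarrow>
     (\<exists>F\<in>carrier_mat (N - 1) N.
        (\<forall>y\<in>carrier_vec (N - 1). \<exists>x\<in>carrier_vec N. F *\<^sub>v x = y) \<and>
        (\<forall>x\<in>carrier_vec N. F *\<^sub>v x = 0\<^sub>v (N - 1) \<longleftrightarrow> (\<exists>c. x = c \<cdot>\<^sub>v col Lam u)) \<and>
        mu = Matrix.mat (N - 1) (M - 1) (\<lambda>(i, j). (F * Lam) $$ (i, r j)))"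

definition pre_edge :: "nat \<Rightarrow> nat \<Rightarrow> nat set set \<Rightarrow> nat \<Rightarrow> 'a::comm_ring_1 mat \<Rightarrow> 'a mat \<Rightarrow> bool" where
  "pre_edge n m K v l1 l2 \<longleftrightarrow>
     (\<exists>Lam. char_map (n + 1) (m + 1) (wedge K v m) Lam \<and>
        (\<exists>mu. is_proj (n + 1) (m + 1) Lam v (\<lambda>j. if j = v then m else j) mu \<and> DJ_equiv n mu l1) \<and>
        (\<exists>mu. is_proj (n + 1) (m + 1) Lam m (\<lambda>j. j) mu \<and> DJ_equiv n mu l2))"

definition Pr_rel :: "nat \<Rightarrow> 'a::comm_ring_1 mat \<Rightarrow> nat \<Rightarrow> 'a mat \<Rightarrow> bool" where
  "Pr_rel n l v P \<longleftrightarrow>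
     (\<exists>g\<in>carrier_mat n n. invertible_mat g \<and> (g * l) $$ (0, v) = 1 \<and> (\<forall>i<n. i \<noteq> 0 \<longrightarrow> (g * l) $$ (i, v) = 0) \<and>
        P = Matrix.mat (n - 1) (dim_col l - 1) (\<lambda>(i, j). (g * l) $$ (i + 1, if j < v then j else j + 1)))"

definition Pr_equiv :: "nat \<Rightarrow> 'a::comm_ring_1 mat \<Rightarrow> 'a mat \<Rightarrow> nat \<Rightarrow> bool" where
  "Pr_equiv n l1 l2 v \<longleftrightarrow>
     (\<exists>P1 P2. Pr_rel n l1 v P1 \<and> Pr_rel n l2 v P2 \<and>
        (\<exists>h\<in>carrier_mat (n - 1) (n - 1). invertible_mat h \<and> h * P1 = P2))"

end

theory Submission
  imports Defs
begin

definition bas :: "nat \<Rightarrow> (nat \<Rightarrow> nat \<Rightarrow> 'a::comm_ring_1) \<Rightarrow> nat set \<Rightarrow> bool" where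
  "bas N G S \<longleftrightarrow> (\<forall>y. \<exists>c. \<forall>k<N. y k = (\<Sum>j\<in>S. c j * G k j)) \<and>
     (\<forall>c. (\<forall>k<N. (\<Sum>j\<in>S. c j * G k j) = 0) \<longrightarrow> (\<forall>j\<in>S. c j = 0))"

lemma R_basis_bas:
  assumes "l \<in> carrier_mat N M" "S \<subseteq> {..<M}"
  shows "R_basis N (col l) S \<longleftrightarrow> finite S \<and> bas N (\<lambda>k j. l $$ (k,j)) S"
proof -
  have colk: "\<And>k j. k < N \<Longrightarrow> j \<in> S \<Longrightarrow> col l j $ k = l $$ (k,j)"
    using assms by auto
  have colc: "\<forall>i\<in>S. col l i \<in> carrier_vec N" using assms by auto
  have sumeq: "\<And>c k. k < N \<Longrightarrow> (\<Sum>i\<in>S. c i * col l i $ k) = (\<Sum>i\<in>S. c i * l $$ (k,i))"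
    by (rule sum.cong) (auto simp: colk)
  show ?thesis
  proof
    assume R: "R_basis N (col l) S"
    hence fin: "finite S" unfolding R_basis_def by auto
    have sp: "\<forall>y. \<exists>c. \<forall>k<N. y k = (\<Sum>j\<in>S. c j * l $$ (k,j))"
    proof
      fix y :: "nat \<Rightarrow> 'a"
      have "vec N y \<in> carrier_vec N" by simp
      then obtain c where "\<forall>k<N. vec N y $ k = (\<Sum>i\<in>S. c i * col l i $ k)"
        using R unfolding R_basis_def by blast
      thus "\<exists>c. \<forall>k<N. y k = (\<Sum>j\<in>S. c j * l $$ (k,j))" using sumeq by auto
    qed
    have ind: "\<forall>c. (\<forall>k<N. (\<Sum>j\<in>S. c j * l $$ (k,j)) = 0) \<longrightarrow> (\<forall>j\<in>S. c j = 0)"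
    proof (intro allI impI)
      fix c :: "nat \<Rightarrow> 'a" assume h: "\<forall>k<N. (\<Sum>j\<in>S. c j * l $$ (k,j)) = 0"
      define c0 where "c0 i = (if i \<in> S then c i else 0)" for i
      let ?P = "\<lambda>e. (\<forall>i. i \<notin> S \<longrightarrow> e i = 0) \<and> (\<forall>k<N. (0\<^sub>v N :: 'a Matrix.vec) $ k = (\<Sum>i\<in>S. e i * col l i $ k))"
      have "(0\<^sub>v N :: 'a Matrix.vec) \<in> carrier_vec N" by simp
      hence ex: "\<exists>!e. ?P e" using R unfolding R_basis_def by blast
      have p1: "?P c0"
      proof (intro conjI allI impI)
        fix i assume "i \<notin> S" thus "c0 i = 0" by (simp add: c0_def)
      next
        fix k assume k: "k < N"
        have "(\<Sum>i\<in>S. c0 i * col l i $ k) = (\<Sum>i\<in>S. c i * col l i $ k)"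
          by (rule sum.cong) (auto simp: c0_def)
        also have "\<dots> = 0" using sumeq[OF k, of c] h k by simp
        finally show "(0\<^sub>v N :: 'a Matrix.vec) $ k = (\<Sum>i\<in>S. c0 i * col l i $ k)" using k by simp
      qed
      have p2: "?P (\<lambda>_. 0)" by simp
      have "c0 = (\<lambda>_. 0)" using the1_equality[of "?P", OF ex p1] the1_equality[of "?P", OF ex p2] by simp
      thus "\<forall>j\<in>S. c j = 0" unfolding c0_def by (metis)
    qed
    show "finite S \<and> bas N (\<lambda>k j. l $$ (k,j)) S" using fin sp ind by (auto simp: bas_def)
  next
    assume h: "finite S \<and> bas N (\<lambda>k j. l $$ (k,j)) S"
    show "R_basis N (col l) S" unfolding R_basis_def
    proof (intro conjI ballI)
      show "finite S" using h by auto
      show "\<And>i. i \<in> S \<Longrightarrow> col l i \<in> carrier_vec N" using colc by auto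
      fix y :: "'a vec" assume y: "y \<in> carrier_vec N"
      have sp: "\<forall>y. \<exists>c. \<forall>k<N. y k = (\<Sum>j\<in>S. c j * l $$ (k,j))"
        using h unfolding bas_def by simp
      obtain c where c: "\<forall>k<N. y $ k = (\<Sum>j\<in>S. c j * l $$ (k,j))"
        using spec[OF sp, of "\<lambda>k. y $ k"] by auto
      define c0 where "c0 i = (if i \<in> S then c i else 0)" for i
      show "\<exists>!c. (\<forall>i. i \<notin> S \<longrightarrow> c i = 0) \<and> (\<forall>k<N. y $ k = (\<Sum>i\<in>S. c i * col l i $ k))"
      proof (rule ex1I)
        show "(\<forall>i. i \<notin> S \<longrightarrow> c0 i = 0) \<and> (\<forall>k<N. y $ k = (\<Sum>i\<in>S. c0 i * col l i $ k))"
        proof (intro conjI allI impI)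
          fix i assume "i \<notin> S" thus "c0 i = 0" by (simp add: c0_def)
        next
          fix k assume k: "k < N"
          have "(\<Sum>i\<in>S. c0 i * col l i $ k) = (\<Sum>i\<in>S. c i * col l i $ k)"
            by (rule sum.cong) (auto simp: c0_def)
          thus "y $ k = (\<Sum>i\<in>S. c0 i * col l i $ k)" using sumeq[OF k, of c] c k by simp
        qed
      next
        fix e assume e: "(\<forall>i. i \<notin> S \<longrightarrow> e i = 0) \<and> (\<forall>k<N. y $ k = (\<Sum>i\<in>S. e i * col l i $ k))"
        have "\<forall>k<N. (\<Sum>j\<in>S. (e j - c0 j) * l $$ (k,j)) = 0"
        proof (intro allI impI)
          fix k assume k: "k < N"
          have "(\<Sum>j\<in>S. (e j - c0 j) * l $$ (k,j)) = (\<Sum>j\<in>S. e j * l $$ (k,j)) - (\<Sum>j\<in>S. c0 j * l $$ (k,j))"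
            by (simp add: algebra_simps sum_subtractf)
          also have "(\<Sum>j\<in>S. c0 j * l $$ (k,j)) = (\<Sum>j\<in>S. c j * l $$ (k,j))"
            by (rule sum.cong) (auto simp: c0_def)
          also have "(\<Sum>j\<in>S. e j * l $$ (k,j)) - (\<Sum>j\<in>S. c j * l $$ (k,j)) = y $ k - y $ k"
            using e c k sumeq[OF k, of e] by simp
          finally show "(\<Sum>j\<in>S. (e j - c0 j) * l $$ (k,j)) = 0" by simp
        qed
        hence "\<forall>j\<in>S. e j - c0 j = 0" using h unfolding bas_def by (elim conjE allE[of _ "\<lambda>j. e j - c0 j"]) simp
        thus "e = c0" using e by (auto simp: c0_def)
      qed
    qed
  qed
qed

definition sh :: "nat \<Rightarrow> nat \<Rightarrow> nat" where "sh r k = (if k < r then k else Suc k)"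

lemma bas_span: "bas N G S \<Longrightarrow> \<exists>c. \<forall>k<N. y k = (\<Sum>j\<in>S. c j * G k j)"
  unfolding bas_def by blast

lemma bas_indep: "bas N G S \<Longrightarrow> (\<And>k. k<N \<Longrightarrow> (\<Sum>j\<in>S. c j * G k j) = 0) \<Longrightarrow> j \<in> S \<Longrightarrow> c j = 0"
  unfolding bas_def by blast

lemma basI: "(\<And>y. \<exists>c. \<forall>k<N. y k = (\<Sum>j\<in>S. c j * G k j)) \<Longrightarrow>
   (\<And>c. (\<forall>k<N. (\<Sum>j\<in>S. c j * G k j) = 0) \<Longrightarrow> (\<forall>j\<in>S. c j = 0)) \<Longrightarrow> bas N G S"
  unfolding bas_def by blast

lemma sh_cases: "k < Suc N \<Longrightarrow> k \<noteq> r \<Longrightarrow> r \<le> N \<Longrightarrow> \<exists>k'<N. k = sh r k'"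
proof -
  assume a: "k < Suc N" "k \<noteq> r" "r \<le> N"
  show ?thesis
  proof (cases "k < r")
    case True thus ?thesis using a by (intro exI[of _ k]) (auto simp: sh_def)
  next
    case False thus ?thesis using a by (intro exI[of _ "k - 1"]) (auto simp: sh_def)
  qed
qed

lemma sh_ne: "sh r k \<noteq> r" by (auto simp: sh_def)
lemma sh_lt: "k < N \<Longrightarrow> sh r k < Suc N" by (auto simp: sh_def)

lemma bas_insert:
  assumes b: "bas N G S" and fin: "finite S" and u: "u \<notin> S" and r: "r \<le> N"
    and row: "\<forall>k<N. \<forall>j\<in>S. G' (sh r k) j = G k j"
    and colu: "\<forall>k<Suc N. G' k u = (if k = r then 1 else 0)"
  shows "bas (Suc N) G' (insert u S)"
proof (rule basI)
  fix y :: "nat \<Rightarrow> 'a"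
  obtain c where c: "\<forall>k<N. y (sh r k) = (\<Sum>j\<in>S. c j * G k j)"
    using bas_span[OF b, of "\<lambda>k. y (sh r k)"] by auto
  define c' where "c' = c(u := y r - (\<Sum>j\<in>S. c j * G' r j))"
  have eqS: "\<And>k. (\<Sum>j\<in>S. c' j * G' k j) = (\<Sum>j\<in>S. c j * G' k j)"
    using u by (intro sum.cong) (auto simp: c'_def)
  have "\<forall>k<Suc N. y k = (\<Sum>j\<in>insert u S. c' j * G' k j)"
  proof (intro allI impI)
    fix k assume k: "k < Suc N"
    have e: "(\<Sum>j\<in>insert u S. c' j * G' k j) = c' u * G' k u + (\<Sum>j\<in>S. c j * G' k j)"
      using fin u eqS by simp
    show "y k = (\<Sum>j\<in>insert u S. c' j * G' k j)"
    proof (cases "k = r")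
      case True thus ?thesis using e colu k by (simp add: c'_def)
    next
      case False
      then obtain k' where k': "k' < N" "k = sh r k'" using sh_cases k r by blast
      have "(\<Sum>j\<in>S. c j * G' k j) = (\<Sum>j\<in>S. c j * G k' j)"
        using row k' by (intro sum.cong) auto
      thus ?thesis using e colu k False c k' by simp
    qed
  qed
  thus "\<exists>c. \<forall>k<Suc N. y k = (\<Sum>j\<in>insert u S. c j * G' k j)" by blast
next
  fix c :: "nat \<Rightarrow> 'a" assume z: "\<forall>k<Suc N. (\<Sum>j\<in>insert u S. c j * G' k j) = 0"
  have zS: "\<forall>j\<in>S. c j = 0"
  proof
    fix j assume j: "j \<in> S"
    show "c j = 0"
    proof (rule bas_indep[OF b _ j])
      fix k assume k: "k < N"
      have "(\<Sum>j\<in>insert u S. c j * G' (sh r k) j) = 0" using z sh_lt[OF k] by blast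
      hence "c u * G' (sh r k) u + (\<Sum>j\<in>S. c j * G' (sh r k) j) = 0" using fin u by simp
      moreover have "G' (sh r k) u = 0" using colu sh_lt[OF k] sh_ne by simp
      moreover have "(\<Sum>j\<in>S. c j * G' (sh r k) j) = (\<Sum>j\<in>S. c j * G k j)"
        using row k by (intro sum.cong) auto
      ultimately show "(\<Sum>j\<in>S. c j * G k j) = 0" by simp
    qed
  qed
  have "(\<Sum>j\<in>insert u S. c j * G' r j) = 0" using z r by auto
  hence "c u * G' r u + (\<Sum>j\<in>S. c j * G' r j) = 0" using fin u by simp
  moreover have "(\<Sum>j\<in>S. c j * G' r j) = 0" using zS by simp
  moreover have "G' r u = 1" using colu r by simp
  ultimately have "c u = 0" by simp
  thus "\<forall>j\<in>insert u S. c j = 0" using zS by blast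
qed

lemma bas_remove:
  assumes b: "bas (Suc N) G' (insert u S)" and fin: "finite S" and u: "u \<notin> S" and r: "r \<le> N"
    and row: "\<forall>k<N. \<forall>j\<in>S. G' (sh r k) j = G k j"
    and colu: "\<forall>k<Suc N. G' k u = (if k = r then 1 else 0)"
  shows "bas N G S"
proof (rule basI)
  fix z :: "nat \<Rightarrow> 'a"
  obtain c where c: "\<forall>k<Suc N. z (if k < r then k else k - 1) = (\<Sum>j\<in>insert u S. c j * G' k j)"
    using bas_span[OF b, of "\<lambda>k. z (if k < r then k else k - 1)"] by auto
  have "\<forall>k<N. z k = (\<Sum>j\<in>S. c j * G k j)"
  proof (intro allI impI)
    fix k assume k: "k < N"
    have i: "(if sh r k < r then sh r k else sh r k - 1) = k" by (simp add: sh_def)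
    have "z (if sh r k < r then sh r k else sh r k - 1) = (\<Sum>j\<in>insert u S. c j * G' (sh r k) j)"
      using c sh_lt[OF k, of r] by blast
    hence "z k = (\<Sum>j\<in>insert u S. c j * G' (sh r k) j)" unfolding i .
    also have "\<dots> = c u * G' (sh r k) u + (\<Sum>j\<in>S. c j * G' (sh r k) j)" using fin u by simp
    also have "G' (sh r k) u = 0" using colu sh_lt[OF k] sh_ne by simp
    also have "(\<Sum>j\<in>S. c j * G' (sh r k) j) = (\<Sum>j\<in>S. c j * G k j)"
      using row k by (intro sum.cong) auto
    finally show "z k = (\<Sum>j\<in>S. c j * G k j)" by simp
  qed
  thus "\<exists>c. \<forall>k<N. z k = (\<Sum>j\<in>S. c j * G k j)" by blast
next
  fix c :: "nat \<Rightarrow> 'a" assume z: "\<forall>k<N. (\<Sum>j\<in>S. c j * G k j) = 0"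
  define c' where "c' = c(u := - (\<Sum>j\<in>S. c j * G' r j))"
  have eqS: "\<And>k. (\<Sum>j\<in>S. c' j * G' k j) = (\<Sum>j\<in>S. c j * G' k j)"
    using u by (intro sum.cong) (auto simp: c'_def)
  have cz: "c' j = 0" if j: "j \<in> S" for j
  proof (rule bas_indep[OF b _ insertI2[OF j]])
    fix k assume k: "k < Suc N"
    have e: "(\<Sum>j\<in>insert u S. c' j * G' k j) = c' u * G' k u + (\<Sum>j\<in>S. c j * G' k j)"
      using fin u eqS by simp
    show "(\<Sum>j\<in>insert u S. c' j * G' k j) = 0"
    proof (cases "k = r")
      case True thus ?thesis using e colu k by (simp add: c'_def)
    next
      case False
      then obtain k' where k': "k' < N" "k = sh r k'" using sh_cases k r by blast
      have "(\<Sum>j\<in>S. c j * G' k j) = (\<Sum>j\<in>S. c j * G k' j)"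
        using row k' by (intro sum.cong) auto
      thus ?thesis using e colu k False z k' by simp
    qed
  qed
  show "\<forall>j\<in>S. c j = 0"
  proof
    fix j assume j: "j \<in> S"
    have "j \<noteq> u" using u j by auto
    hence "c j = c' j" by (simp add: c'_def)
    also have "\<dots> = 0" by (rule cz[OF j])
    finally show "c j = 0" .
  qed
qed

lemma mult_entry:
  assumes "A \<in> carrier_mat a b" "B \<in> carrier_mat b c" "k < a" "j < c"
  shows "(A * B) $$ (k,j) = (\<Sum>p<b. A $$ (k,p) * B $$ (p,j))"
  using assms by (auto simp: scalar_prod_def atLeast0LessThan intro!: sum.cong)

lemma lin_assoc:
  assumes "A \<in> carrier_mat a b" "B \<in> carrier_mat b c" "k < a"
  shows "(\<Sum>q<c. (A * B) $$ (k,q) * x q) = (\<Sum>p<b. A $$ (k,p) * (\<Sum>q<c. B $$ (p,q) * x q))"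
proof -
  have "(\<Sum>q<c. (A * B) $$ (k,q) * x q) = (\<Sum>q<c. (\<Sum>p<b. A $$ (k,p) * B $$ (p,q)) * x q)"
    by (intro sum.cong refl) (simp add: mult_entry[OF assms(1) assms(2) assms(3)])
  also have "\<dots> = (\<Sum>q<c. \<Sum>p<b. A $$ (k,p) * (B $$ (p,q) * x q))"
    by (simp add: sum_distrib_right mult.assoc)
  also have "\<dots> = (\<Sum>p<b. \<Sum>q<c. A $$ (k,p) * (B $$ (p,q) * x q))"
    by (rule sum.swap)
  also have "\<dots> = (\<Sum>p<b. A $$ (k,p) * (\<Sum>q<c. B $$ (p,q) * x q))"
    by (simp add: sum_distrib_left)
  finally show ?thesis .
qed

lemma lin_one: "k < N \<Longrightarrow> (\<Sum>q<N. (1\<^sub>m N :: 'a::comm_ring_1 mat) $$ (k,q) * x q) = x k"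
proof -
  assume k: "k < N"
  have "(\<Sum>q<N. (1\<^sub>m N :: 'a mat) $$ (k,q) * x q) = (\<Sum>q<N. (if k = q then x q else 0))"
    using k by (intro sum.cong) auto
  also have "\<dots> = x k" using k by simp
  finally show ?thesis .
qed

lemma inv_obtain:
  fixes g :: "'a::comm_ring_1 mat"
  assumes "g \<in> carrier_mat N N" "invertible_mat g"
  obtains h where "h \<in> carrier_mat N N" "g * h = 1\<^sub>m N" "h * g = 1\<^sub>m N"
proof -
  obtain h where h: "inverts_mat g h" "inverts_mat h g"
    using assms unfolding invertible_mat_def by blast
  have e1: "g * h = 1\<^sub>m N" using h(1) assms(1) unfolding inverts_mat_def by simp
  have e2: "h * g = 1\<^sub>m (dim_row h)" using h(2) unfolding inverts_mat_def by simp
  have d1: "dim_col h = N"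
  proof -
    have "dim_col (g * h) = dim_col (1\<^sub>m N :: 'a mat)" using e1 by simp
    thus ?thesis by simp
  qed
  have d2: "dim_row h = N"
  proof -
    have "dim_col (h * g) = dim_col (1\<^sub>m (dim_row h) :: 'a mat)" using e2 by simp
    thus ?thesis using assms(1) by simp
  qed
  show ?thesis
  proof (rule that[of h])
    show "h \<in> carrier_mat N N" using d1 d2 by auto
    show "g * h = 1\<^sub>m N" by (rule e1)
    show "h * g = 1\<^sub>m N" using e2 d2 by simp
  qed
qed

lemma bas_mult:
  assumes g: "g \<in> carrier_mat N N" "invertible_mat g" and l: "l \<in> carrier_mat N M"
    and S: "S \<subseteq> {..<M}" and b: "bas N (\<lambda>k j. l $$ (k,j)) S"
  shows "bas N (\<lambda>k j. (g * l) $$ (k,j)) S"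
proof -
  obtain h where h: "h \<in> carrier_mat N N" "g * h = 1\<^sub>m N" "h * g = 1\<^sub>m N"
    using inv_obtain[OF g] by blast
  have key: "(\<Sum>j\<in>S. c j * (g * l) $$ (k,j)) = (\<Sum>p<N. g $$ (k,p) * (\<Sum>j\<in>S. c j * l $$ (p,j)))"
    if k: "k < N" for c k
  proof -
    have "(\<Sum>j\<in>S. c j * (g * l) $$ (k,j)) = (\<Sum>j\<in>S. c j * (\<Sum>p<N. g $$ (k,p) * l $$ (p,j)))"
      using S by (intro sum.cong refl) (auto simp: mult_entry[OF g(1) l k])
    also have "\<dots> = (\<Sum>j\<in>S. \<Sum>p<N. g $$ (k,p) * (c j * l $$ (p,j)))"
      by (simp add: sum_distrib_left ac_simps)
    also have "\<dots> = (\<Sum>p<N. \<Sum>j\<in>S. g $$ (k,p) * (c j * l $$ (p,j)))" by (rule sum.swap)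
    also have "\<dots> = (\<Sum>p<N. g $$ (k,p) * (\<Sum>j\<in>S. c j * l $$ (p,j)))"
      by (simp add: sum_distrib_left)
    finally show ?thesis .
  qed
  show ?thesis
  proof (rule basI)
    fix y :: "nat \<Rightarrow> 'a"
    obtain c where c: "\<forall>p<N. (\<Sum>q<N. h $$ (p,q) * y q) = (\<Sum>j\<in>S. c j * l $$ (p,j))"
      using bas_span[OF b, of "\<lambda>p. (\<Sum>q<N. h $$ (p,q) * y q)"] by auto
    have "\<forall>k<N. y k = (\<Sum>j\<in>S. c j * (g * l) $$ (k,j))"
    proof (intro allI impI)
      fix k assume k: "k < N"
      have "(\<Sum>j\<in>S. c j * (g * l) $$ (k,j)) = (\<Sum>p<N. g $$ (k,p) * (\<Sum>q<N. h $$ (p,q) * y q))"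
        using key[OF k] c by simp
      also have "\<dots> = (\<Sum>q<N. (g * h) $$ (k,q) * y q)"
        using lin_assoc[OF g(1) h(1) k] by simp
      also have "\<dots> = (\<Sum>q<N. (1\<^sub>m N :: 'a mat) $$ (k,q) * y q)" by (simp only: h(2))
      also have "\<dots> = y k" by (rule lin_one[OF k])
      finally show "y k = (\<Sum>j\<in>S. c j * (g * l) $$ (k,j))" by simp
    qed
    thus "\<exists>c. \<forall>k<N. y k = (\<Sum>j\<in>S. c j * (g * l) $$ (k,j))" by blast
  next
    fix c :: "nat \<Rightarrow> 'a" assume z: "\<forall>k<N. (\<Sum>j\<in>S. c j * (g * l) $$ (k,j)) = 0"
    define w where "w p = (\<Sum>j\<in>S. c j * l $$ (p,j))" for p
    have gw: "\<forall>k<N. (\<Sum>p<N. g $$ (k,p) * w p) = 0" using z key by (simp add: w_def)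
    have "\<forall>p<N. w p = 0"
    proof (intro allI impI)
      fix p assume p: "p < N"
      have "w p = (\<Sum>q<N. (1\<^sub>m N :: 'a mat) $$ (p,q) * w q)" by (rule lin_one[OF p, symmetric])
      also have "\<dots> = (\<Sum>q<N. (h * g) $$ (p,q) * w q)" by (simp only: h(3))
      also have "\<dots> = (\<Sum>k<N. h $$ (p,k) * (\<Sum>q<N. g $$ (k,q) * w q))"
        using lin_assoc[OF h(1) g(1) p] by simp
      also have "\<dots> = 0" using gw by simp
      finally show "w p = 0" .
    qed
    thus "\<forall>j\<in>S. c j = 0" using bas_indep[OF b] unfolding w_def by blast
  qed
qed

definition Del :: "nat \<Rightarrow> nat \<Rightarrow> 'a::comm_ring_1 mat" where
  "Del r n = Matrix.mat n (Suc n) (\<lambda>(i,k). if k = sh r i then 1 else 0)"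

lemma Del_carrier: "Del r n \<in> carrier_mat n (Suc n)" by (simp add: Del_def)

lemma delta_sum: "(a::nat) < N \<Longrightarrow> (\<Sum>k\<in>{0..<N}. (if k = a then 1 else 0) * (f k :: 'a::comm_ring_1)) = f a"
proof -
  assume a: "a < N"
  have "(\<Sum>k\<in>{0..<N}. (if k = a then 1 else 0) * f k) = (if a = a then 1 else 0) * f a + (\<Sum>k\<in>{0..<N}-{a}. (if k = a then 1 else 0) * f k)"
    by (rule sum.remove) (auto simp: a)
  also have "(\<Sum>k\<in>{0..<N}-{a}. (if k = a then 1 else 0) * f k) = 0"
    by (rule sum.neutral) auto
  finally show ?thesis by simp
qed

lemma Del_vec: "i < n \<Longrightarrow> x \<in> carrier_vec (Suc n) \<Longrightarrow> (Del r n *\<^sub>v x) $ i = x $ (sh r i)"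
proof -
  assume i: "i < n" and x: "x \<in> carrier_vec (Suc n)"
  have "(Del r n *\<^sub>v x) $ i = (\<Sum>k\<in>{0..<Suc n}. (if k = sh r i then 1 else 0) * x $ k)"
    using i x by (auto simp: Del_def scalar_prod_def intro!: sum.cong)
  also have "\<dots> = x $ (sh r i)" by (rule delta_sum) (rule sh_lt[OF i])
  finally show ?thesis .
qed

lemma Del_mat: "X \<in> carrier_mat (Suc n) c \<Longrightarrow> i < n \<Longrightarrow> j < c \<Longrightarrow> (Del r n * X) $$ (i,j) = X $$ (sh r i, j)"
proof -
  assume X: "X \<in> carrier_mat (Suc n) c" and i: "i < n" and j: "j < c"
  have "(Del r n * X) $$ (i,j) = (\<Sum>k\<in>{0..<Suc n}. (if k = sh r i then 1 else 0) * X $$ (k,j))"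
    using i j X by (auto simp: Del_def scalar_prod_def intro!: sum.cong)
  also have "\<dots> = X $$ (sh r i, j)" by (rule delta_sum) (rule sh_lt[OF i])
  finally show ?thesis .
qed

lemma Del_surj: "y \<in> carrier_vec n \<Longrightarrow> \<exists>x\<in>carrier_vec (Suc n). (Del r n :: 'a::comm_ring_1 mat) *\<^sub>v x = y"
proof -
  assume y: "y \<in> carrier_vec n"
  define x where "x = Matrix.vec (Suc n) (\<lambda>k. if k = r then 0 else y $ (if k < r then k else k - 1))"
  have "(Del r n :: 'a mat) *\<^sub>v x = y"
  proof (rule eq_vecI)
    fix i assume "i < dim_vec y"
    hence i: "i < n" using y by simp
    have "(Del r n *\<^sub>v x) $ i = x $ (sh r i)" by (rule Del_vec[OF i]) (simp add: x_def)
    also have "\<dots> = y $ i" using sh_lt[OF i, of r] by (simp add: x_def sh_def)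
    finally show "(Del r n *\<^sub>v x) $ i = y $ i" .
  next
    show "dim_vec ((Del r n :: 'a mat) *\<^sub>v x) = dim_vec y" using y by (simp add: Del_def)
  qed
  moreover have "x \<in> carrier_vec (Suc n)" by (simp add: x_def)
  ultimately show ?thesis by blast
qed

lemma Del_ker:
  assumes r: "r \<le> n" and x: "x \<in> carrier_vec (Suc n)"
  shows "((Del r n :: 'a::comm_ring_1 mat) *\<^sub>v x = 0\<^sub>v n) \<longleftrightarrow> (\<exists>c. x = c \<cdot>\<^sub>v unit_vec (Suc n) r)"
proof
  assume z: "(Del r n :: 'a mat) *\<^sub>v x = 0\<^sub>v n"
  have "x = x $ r \<cdot>\<^sub>v unit_vec (Suc n) r"
  proof (rule eq_vecI)
    fix k assume "k < dim_vec (x $ r \<cdot>\<^sub>v unit_vec (Suc n) r)"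
    hence k: "k < Suc n" by simp
    show "x $ k = (x $ r \<cdot>\<^sub>v unit_vec (Suc n) r) $ k"
    proof (cases "k = r")
      case True thus ?thesis using k by simp
    next
      case False
      then obtain k' where k': "k' < n" "k = sh r k'" using sh_cases[OF k False r] by blast
      have "x $ k = (Del r n *\<^sub>v x) $ k'" using Del_vec[OF k'(1) x] k'(2) by simp
      also have "\<dots> = 0" using z k'(1) by simp
      finally show ?thesis using k False r by simp
    qed
  qed (use x in simp)
  thus "\<exists>c. x = c \<cdot>\<^sub>v unit_vec (Suc n) r" by blast
next
  assume "\<exists>c. x = c \<cdot>\<^sub>v unit_vec (Suc n) r"
  then obtain c where c: "x = c \<cdot>\<^sub>v unit_vec (Suc n) r" by blast
  show "(Del r n :: 'a mat) *\<^sub>v x = 0\<^sub>v n"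
  proof (rule eq_vecI)
    fix i assume "i < dim_vec (0\<^sub>v n :: 'a Matrix.vec)"
    hence i: "i < n" by simp
    have "(Del r n *\<^sub>v x) $ i = x $ (sh r i)" by (rule Del_vec[OF i x])
    also have "\<dots> = 0" using c sh_lt[OF i, of r] sh_ne[of r i] r by simp
    finally show "(Del r n *\<^sub>v x) $ i = 0\<^sub>v n $ i" using i by simp
  qed (simp add: Del_def)
qed

definition Dm :: "'a::comm_ring_1 mat \<Rightarrow> nat \<Rightarrow> 'a mat" where
  "Dm h n0 = Matrix.mat (Suc n0) (Suc n0) (\<lambda>(i,j). if i = 0 \<and> j = 0 then 1 else if i = 0 \<or> j = 0 then 0 else h $$ (i - 1, j - 1))"

lemma Dm_carrier: "Dm h n0 \<in> carrier_mat (Suc n0) (Suc n0)" by (simp add: Dm_def)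

lemma Dm_row0: "A \<in> carrier_mat (Suc n0) c \<Longrightarrow> j < c \<Longrightarrow> (Dm h n0 * A) $$ (0,j) = A $$ (0,j)"
proof -
  assume A: "A \<in> carrier_mat (Suc n0) c" and j: "j < c"
  have "(Dm h n0 * A) $$ (0,j) = (\<Sum>p<Suc n0. Dm h n0 $$ (0,p) * A $$ (p,j))"
    by (rule mult_entry[OF Dm_carrier A _ j]) simp
  also have "\<dots> = Dm h n0 $$ (0,0) * A $$ (0,j) + (\<Sum>p<n0. Dm h n0 $$ (0,Suc p) * A $$ (Suc p,j))"
    by (rule sum.lessThan_Suc_shift)
  also have "\<dots> = A $$ (0,j)" by (simp add: Dm_def)
  finally show ?thesis .
qed

lemma Dm_rowS: "A \<in> carrier_mat (Suc n0) c \<Longrightarrow> j < c \<Longrightarrow> i < n0 \<Longrightarrow>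
   (Dm h n0 * A) $$ (Suc i,j) = (\<Sum>p<n0. h $$ (i,p) * A $$ (Suc p,j))"
proof -
  assume A: "A \<in> carrier_mat (Suc n0) c" and j: "j < c" and i: "i < n0"
  have "(Dm h n0 * A) $$ (Suc i,j) = (\<Sum>p<Suc n0. Dm h n0 $$ (Suc i,p) * A $$ (p,j))"
    by (rule mult_entry[OF Dm_carrier A _ j]) (simp add: i)
  also have "\<dots> = Dm h n0 $$ (Suc i,0) * A $$ (0,j) + (\<Sum>p<n0. Dm h n0 $$ (Suc i,Suc p) * A $$ (Suc p,j))"
    by (rule sum.lessThan_Suc_shift)
  also have "\<dots> = (\<Sum>p<n0. h $$ (i,p) * A $$ (Suc p,j))"
    using i by (simp add: Dm_def)
  finally show ?thesis .
qed

lemma Dm_mult: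
  assumes h: "h \<in> carrier_mat n0 n0" and h': "h' \<in> carrier_mat n0 n0"
  shows "Dm h n0 * Dm h' n0 = Dm (h * h') n0"
proof (rule eq_matI)
  fix i j assume "i < dim_row (Dm (h * h') n0)" "j < dim_col (Dm (h * h') n0)"
  hence i: "i < Suc n0" and j: "j < Suc n0" by (auto simp: Dm_def)
  show "(Dm h n0 * Dm h' n0) $$ (i,j) = Dm (h * h') n0 $$ (i,j)"
  proof (cases i)
    case 0 thus ?thesis using Dm_row0[OF Dm_carrier[of h' n0] j, of h] j by (simp add: Dm_def)
  next
    case (Suc i')
    hence i': "i' < n0" using i by simp
    have "(Dm h n0 * Dm h' n0) $$ (i,j) = (\<Sum>p<n0. h $$ (i',p) * Dm h' n0 $$ (Suc p,j))"
      using Dm_rowS[OF Dm_carrier j i'] Suc by simp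
    also have "\<dots> = Dm (h * h') n0 $$ (i,j)"
    proof (cases j)
      case 0 thus ?thesis using Suc i by (simp add: Dm_def)
    next
      case (Suc j')
      hence j': "j' < n0" using j by simp
      have "(\<Sum>p<n0. h $$ (i',p) * Dm h' n0 $$ (Suc p,j)) = (\<Sum>p<n0. h $$ (i',p) * h' $$ (p,j'))"
        using Suc j' by (intro sum.cong) (auto simp: Dm_def)
      also have "\<dots> = (h * h') $$ (i',j')" by (rule mult_entry[OF h h' i' j', symmetric])
      finally show ?thesis using \<open>i = Suc i'\<close> Suc i j by (simp add: Dm_def)
    qed
    finally show ?thesis .
  qed
qed (auto simp: Dm_def)

lemma Dm_one: "Dm (1\<^sub>m n0) n0 = (1\<^sub>m (Suc n0) :: 'a::comm_ring_1 mat)"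
  by (rule eq_matI) (auto simp: Dm_def)

lemma invI: "A \<in> carrier_mat N N \<Longrightarrow> B \<in> carrier_mat N N \<Longrightarrow> A * B = 1\<^sub>m N \<Longrightarrow> B * A = 1\<^sub>m N \<Longrightarrow> invertible_mat A"
  unfolding invertible_mat_def inverts_mat_def square_mat.simps by auto

lemma Dm_inv:
  assumes h: "h \<in> carrier_mat n0 n0" "invertible_mat h"
  shows "invertible_mat (Dm h n0)"
proof -
  obtain h' where h': "h' \<in> carrier_mat n0 n0" "h * h' = 1\<^sub>m n0" "h' * h = 1\<^sub>m n0"
    using inv_obtain[OF h] by blast
  show ?thesis
    by (rule invI[OF Dm_carrier[of h n0] Dm_carrier[of h' n0]]) (simp_all add: Dm_mult[OF h(1) h'(1)] Dm_mult[OF h'(1) h(1)] h' Dm_one)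
qed

lemma inv_mult:
  fixes A B :: "'a::comm_ring_1 mat"
  assumes "A \<in> carrier_mat N N" "invertible_mat A" "B \<in> carrier_mat N N" "invertible_mat B"
  shows "invertible_mat (A * B)"
proof -
  obtain A' where A': "A' \<in> carrier_mat N N" "A * A' = 1\<^sub>m N" "A' * A = 1\<^sub>m N"
    using inv_obtain[OF assms(1,2)] by blast
  obtain B' where B': "B' \<in> carrier_mat N N" "B * B' = 1\<^sub>m N" "B' * B = 1\<^sub>m N"
    using inv_obtain[OF assms(3,4)] by blast
  have c: "A \<in> carrier_mat N N" "B \<in> carrier_mat N N" using assms by auto
  have "(A * B) * (B' * A') = A * (B * (B' * A'))" using c A' B' by (intro assoc_mult_mat) auto
  also have "B * (B' * A') = (B * B') * A'" using c A' B' by (intro assoc_mult_mat[symmetric]) auto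
  also have "(B * B') * A' = A'" using B' A' by simp
  finally have e1: "(A * B) * (B' * A') = 1\<^sub>m N" using A' by simp
  have "(B' * A') * (A * B) = B' * (A' * (A * B))" using c A' B' by (intro assoc_mult_mat) auto
  also have "A' * (A * B) = (A' * A) * B" using c A' B' by (intro assoc_mult_mat[symmetric]) auto
  also have "(A' * A) * B = B" using c A' by simp
  finally have e2: "(B' * A') * (A * B) = 1\<^sub>m N" using B' by simp
  show ?thesis by (rule invI[OF _ _ e1 e2]) (use assms A' B' in auto)
qed

lemma inv_inv:
  fixes A B :: "'a::comm_ring_1 mat"
  assumes "A \<in> carrier_mat N N" "B \<in> carrier_mat N N" "A * B = 1\<^sub>m N" "B * A = 1\<^sub>m N"
  shows "invertible_mat B"
  by (rule invI[OF assms(2,1,4,3)])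

lemma sub2_cases: "s \<subseteq> {v, m} \<Longrightarrow> s = {} \<or> s = {v} \<or> s = {m} \<or> s = {v, m}"
proof -
  assume h: "s \<subseteq> {v, m}"
  have "s = (if v \<in> s then {v} else {}) \<union> (if m \<in> s then {m} else {})" using h by auto
  thus ?thesis by (cases "v \<in> s"; cases "m \<in> s") auto
qed

lemma wedge_cases:
  assumes sc: "simplicial_complex_on m K" and dimb: "\<forall>\<sigma>\<in>K. card \<sigma> \<le> n"
    and sw: "\<sigma> \<in> wedge K v m" and cs: "card \<sigma> = Suc n" and v: "v < m"
  shows "(\<exists>\<tau>. \<sigma> = insert m (insert v \<tau>) \<and> insert v \<tau> \<in> K \<and> v \<notin> \<tau> \<and> card (insert v \<tau>) = n) \<or>
         (\<exists>\<tau>. \<sigma> = insert v \<tau> \<and> \<tau> \<in> K \<and> v \<notin> \<tau> \<and> card \<tau> = n) \<or>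
         (\<exists>\<tau>. \<sigma> = insert m \<tau> \<and> \<tau> \<in> K \<and> v \<notin> \<tau> \<and> card \<tau> = n)"
proof -
  have sub: "\<And>\<tau>. \<tau> \<in> K \<Longrightarrow> \<tau> \<subseteq> {..<m}" using sc unfolding simplicial_complex_on_def by blast
  have fin: "\<And>\<tau>. \<tau> \<in> K \<Longrightarrow> finite \<tau>" using sub finite_subset by blast
  have mn: "\<And>\<tau>. \<tau> \<in> K \<Longrightarrow> m \<notin> \<tau>" using sub by blast
  from sw consider
      (A) s \<tau> where "\<sigma> = s \<union> \<tau>" "s \<subseteq> {v, m}" "\<tau> \<in> link K {v}"
    | (B) s \<tau> where "\<sigma> = s \<union> \<tau>" "s \<in> {{}, {v}, {m}}" "\<tau> \<in> K" "v \<notin> \<tau>"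
    unfolding wedge_def by blast
  thus ?thesis
  proof cases
    case (A s \<tau>)
    have t: "\<tau> \<in> K" "v \<notin> \<tau>" "insert v \<tau> \<in> K" using A(3) unfolding link_def by auto
    have ft: "finite \<tau>" and mt: "m \<notin> \<tau>" using fin mn t by auto
    have vm: "v \<noteq> m" using v by simp
    from sub2_cases[OF A(2)] show ?thesis
    proof (elim disjE)
      assume "s = {}"
      hence "\<sigma> = \<tau>" using A by simp
      moreover have "card \<tau> \<le> n" using dimb t by blast
      ultimately have False using cs by simp
      thus ?thesis ..
    next
      assume "s = {v}"
      hence "\<sigma> = insert v \<tau>" using A by simp
      moreover have "card (insert v \<tau>) \<le> n" using dimb t by blast
      ultimately have False using cs by simp
      thus ?thesis ..
    next
      assume "s = {m}"
      hence e: "\<sigma> = insert m \<tau>" using A by simp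
      hence "card \<tau> = n" using cs ft mt by simp
      thus ?thesis using e t by blast
    next
      assume "s = {v, m}"
      hence e: "\<sigma> = insert m (insert v \<tau>)" using A by auto
      hence "card (insert v \<tau>) = n" using cs ft mt vm by simp
      thus ?thesis using e t by blast
    qed
  next
    case (B s \<tau>)
    have ft: "finite \<tau>" and mt: "m \<notin> \<tau>" using fin mn B by auto
    from B(2) show ?thesis
    proof (elim insertE)
      assume "s = {}"
      hence "\<sigma> = \<tau>" using B by simp
      moreover have "card \<tau> \<le> n" using dimb B by blast
      ultimately have False using cs by simp
      thus ?thesis ..
    next
      assume "s = {v}"
      hence e: "\<sigma> = insert v \<tau>" using B by simp
      hence "card \<tau> = n" using cs ft B by simp
      thus ?thesis using e B by blast
    next
      assume "s = {m}"
      hence e: "\<sigma> = insert m \<tau>" using B by simp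
      hence "card \<tau> = n" using cs ft mt by simp
      thus ?thesis using e B by blast
    next
      assume "s \<in> {}" thus ?thesis by simp
    qed
  qed
qed

lemma part1:
  fixes l1 l2 :: "'a::comm_ring_1 mat"
  assumes sc: "simplicial_complex_on m K" and dimb: "\<forall>\<sigma>\<in>K. card \<sigma> \<le> Suc n0" and v: "v < m"
    and c1: "char_map (Suc n0) m K l1" and c2: "char_map (Suc n0) m K l2"
    and pe: "Pr_equiv (Suc n0) l1 l2 v"
  shows "pre_edge (Suc n0) m K v l1 l2"
proof -
  let ?n = "Suc n0"
  have l1: "l1 \<in> carrier_mat ?n m" and l2: "l2 \<in> carrier_mat ?n m"
    using c1 c2 unfolding char_map_def by auto
  obtain P1 P2 h where PR1: "Pr_rel ?n l1 v P1" and PR2: "Pr_rel ?n l2 v P2"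
    and h: "h \<in> carrier_mat n0 n0" "invertible_mat h" "h * P1 = P2"
    using pe unfolding Pr_equiv_def by auto
  obtain g1 where g1: "g1 \<in> carrier_mat ?n ?n" "invertible_mat g1" "(g1 * l1) $$ (0, v) = 1"
      "\<forall>i<?n. i \<noteq> 0 \<longrightarrow> (g1 * l1) $$ (i, v) = 0"
      "P1 = Matrix.mat n0 (m - 1) (\<lambda>(i, j). (g1 * l1) $$ (i + 1, if j < v then j else j + 1))"
    using PR1 l1 unfolding Pr_rel_def by auto
  obtain g2 where g2: "g2 \<in> carrier_mat ?n ?n" "invertible_mat g2" "(g2 * l2) $$ (0, v) = 1"
      "\<forall>i<?n. i \<noteq> 0 \<longrightarrow> (g2 * l2) $$ (i, v) = 0"
      "P2 = Matrix.mat n0 (m - 1) (\<lambda>(i, j). (g2 * l2) $$ (i + 1, if j < v then j else j + 1))"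
    using PR2 l2 unfolding Pr_rel_def by auto
  define A where "A = g1 * l1"
  define B where "B = g2 * l2"
  define G1 where "G1 = Dm h n0 * g1"
  define A' where "A' = Dm h n0 * A"
  have Ac: "A \<in> carrier_mat ?n m" using g1 l1 by (simp add: A_def)
  have Bc: "B \<in> carrier_mat ?n m" using g2 l2 by (simp add: B_def)
  have A'c: "A' \<in> carrier_mat ?n m" unfolding A'_def by (rule mult_carrier_mat[OF Dm_carrier Ac])
  have G1c: "G1 \<in> carrier_mat ?n ?n" unfolding G1_def by (rule mult_carrier_mat[OF Dm_carrier g1(1)])
  have G1i: "invertible_mat G1" unfolding G1_def
    by (rule inv_mult[OF Dm_carrier Dm_inv[OF h(1,2)] g1(1,2)])
  have A'G: "A' = G1 * l1" unfolding A'_def A_def G1_def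
    using g1(1) l1 by (simp add: assoc_mult_mat[OF Dm_carrier g1(1) l1])
  have P1c: "P1 \<in> carrier_mat n0 (m - 1)" using g1(5) by simp
  have FA0: "\<And>j. j < m \<Longrightarrow> A' $$ (0,j) = A $$ (0,j)" unfolding A'_def by (rule Dm_row0[OF Ac])
  have FAS: "\<And>i j. i < n0 \<Longrightarrow> j < m \<Longrightarrow> A' $$ (Suc i,j) = (\<Sum>p<n0. h $$ (i,p) * A $$ (Suc p,j))"
    unfolding A'_def by (rule Dm_rowS[OF Ac])
  have FAv0: "A' $$ (0,v) = 1" using FA0[OF v] g1(3) by (simp add: A_def)
  have FAvS: "\<And>i. i < n0 \<Longrightarrow> A' $$ (Suc i, v) = 0"
  proof -
    fix i assume i: "i < n0"
    have "A' $$ (Suc i, v) = (\<Sum>p<n0. h $$ (i,p) * A $$ (Suc p,v))" by (rule FAS[OF i v])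
    also have "\<dots> = 0" using g1(4) by (intro sum.neutral) (simp add: A_def)
    finally show "A' $$ (Suc i, v) = 0" .
  qed
  have FBv0: "B $$ (0,v) = 1" using g2(3) by (simp add: B_def)
  have FBvS: "\<And>i. i < n0 \<Longrightarrow> B $$ (Suc i, v) = 0" using g2(4) by (simp add: B_def)
  have FAB: "\<And>i j. i < n0 \<Longrightarrow> j < m \<Longrightarrow> A' $$ (Suc i,j) = B $$ (Suc i,j)"
  proof -
    fix i j assume i: "i < n0" and j: "j < m"
    show "A' $$ (Suc i,j) = B $$ (Suc i,j)"
    proof (cases "j = v")
      case True thus ?thesis using FAvS[OF i] FBvS[OF i] by simp
    next
      case False
      define j' where "j' = (if j < v then j else j - 1)"
      have j': "j' < m - 1" using j v False by (auto simp: j'_def)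
      have jj: "(if j' < v then j' else j' + 1) = j" using False by (auto simp: j'_def)
      have P1e: "\<And>p. p < n0 \<Longrightarrow> P1 $$ (p,j') = A $$ (Suc p, j)"
        using g1(5) j' jj by (simp add: A_def)
      have P2e: "P2 $$ (i,j') = B $$ (Suc i, j)"
        using g2(5) j' jj i by (simp add: B_def)
      have "A' $$ (Suc i,j) = (\<Sum>p<n0. h $$ (i,p) * A $$ (Suc p,j))" by (rule FAS[OF i j])
      also have "\<dots> = (\<Sum>p<n0. h $$ (i,p) * P1 $$ (p,j'))" using P1e by (intro sum.cong) auto
      also have "\<dots> = (h * P1) $$ (i,j')" by (rule mult_entry[OF h(1) P1c i j', symmetric])
      also have "\<dots> = B $$ (Suc i, j)" using h(3) P2e by simp
      finally show ?thesis .
    qed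
  qed
  define Lam :: "'a mat" where "Lam = Matrix.mat (Suc ?n) (Suc m) (\<lambda>(i,j). if j = m then (if i = 0 then 1 else 0)
      else if i = 0 then (if j = v then 0 else A' $$ (0,j)) else B $$ (i - 1, j))"
  have Lc: "Lam \<in> carrier_mat (Suc ?n) (Suc m)" by (simp add: Lam_def)
  have LL0: "\<And>j. j < m \<Longrightarrow> Lam $$ (0,j) = (if j = v then 0 else A' $$ (0,j))" by (simp add: Lam_def)
  have LLS: "\<And>i j. i < ?n \<Longrightarrow> j < m \<Longrightarrow> Lam $$ (Suc i,j) = B $$ (i,j)" by (simp add: Lam_def)
  have LLm: "\<And>k. k < Suc ?n \<Longrightarrow> Lam $$ (k,m) = (if k = 0 then 1 else 0)" by (simp add: Lam_def)
  have colv: "col Lam v = unit_vec (Suc ?n) 1"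
  proof (rule eq_vecI)
    fix k assume "k < dim_vec (unit_vec (Suc ?n) 1 :: 'a Matrix.vec)"
    hence k: "k < Suc ?n" by simp
    show "col Lam v $ k = unit_vec (Suc ?n) 1 $ k"
    proof (cases k)
      case 0 thus ?thesis using k v by (simp add: Lam_def)
    next
      case (Suc k')
      thus ?thesis using k v FBv0 FBvS by (cases k') (auto simp: Lam_def)
    qed
  qed (simp add: Lam_def)
  have colm: "col Lam m = unit_vec (Suc ?n) 0"
    by (rule eq_vecI) (auto simp: Lam_def)
  obtain G1' where G1': "G1' \<in> carrier_mat ?n ?n" "G1 * G1' = 1\<^sub>m ?n" "G1' * G1 = 1\<^sub>m ?n"
    using inv_obtain[OF G1c G1i] by blast
  obtain g2' where g2': "g2' \<in> carrier_mat ?n ?n" "g2 * g2' = 1\<^sub>m ?n" "g2' * g2 = 1\<^sub>m ?n"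
    using inv_obtain[OF g2(1,2)] by blast
  have sub: "\<And>\<tau>. \<tau> \<in> K \<Longrightarrow> \<tau> \<subseteq> {..<m}" using sc unfolding simplicial_complex_on_def by blast
  have fin: "\<And>\<tau>. \<tau> \<in> K \<Longrightarrow> finite \<tau>" using sub finite_subset by blast
  have bA: "\<And>\<tau>. \<tau> \<in> K \<Longrightarrow> card \<tau> = ?n \<Longrightarrow> bas ?n (\<lambda>k j. A' $$ (k,j)) \<tau>"
  proof -
    fix \<tau> assume t: "\<tau> \<in> K" "card \<tau> = ?n"
    have "R_basis ?n (col l1) \<tau>" using c1 t unfolding char_map_def by blast
    hence "bas ?n (\<lambda>k j. l1 $$ (k,j)) \<tau>" using R_basis_bas[OF l1 sub[OF t(1)]] by blast
    from bas_mult[OF G1c G1i l1 sub[OF t(1)] this] show "bas ?n (\<lambda>k j. A' $$ (k,j)) \<tau>"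
      unfolding A'G .
  qed
  have bB: "\<And>\<tau>. \<tau> \<in> K \<Longrightarrow> card \<tau> = ?n \<Longrightarrow> bas ?n (\<lambda>k j. B $$ (k,j)) \<tau>"
  proof -
    fix \<tau> assume t: "\<tau> \<in> K" "card \<tau> = ?n"
    have "R_basis ?n (col l2) \<tau>" using c2 t unfolding char_map_def by blast
    hence "bas ?n (\<lambda>k j. l2 $$ (k,j)) \<tau>" using R_basis_bas[OF l2 sub[OF t(1)]] by blast
    from bas_mult[OF g2(1,2) l2 sub[OF t(1)] this] show "bas ?n (\<lambda>k j. B $$ (k,j)) \<tau>"
      unfolding B_def .
  qed
  have CM: "char_map (Suc ?n) (Suc m) (wedge K v m) Lam"
    unfolding char_map_def
  proof (intro conjI ballI impI)
    show "Lam \<in> carrier_mat (Suc ?n) (Suc m)" by (rule Lc)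
    fix \<sigma> assume sw: "\<sigma> \<in> wedge K v m" and cs: "card \<sigma> = Suc ?n"
    have rowA: "\<And>k j. k < ?n \<Longrightarrow> j < m \<Longrightarrow> j \<noteq> v \<Longrightarrow> Lam $$ (sh 1 k, j) = A' $$ (k,j)"
    proof -
      fix k j assume k: "k < ?n" and j: "j < m" and jv: "j \<noteq> v"
      show "Lam $$ (sh 1 k, j) = A' $$ (k,j)"
      proof (cases k)
        case 0 thus ?thesis using LL0[OF j] jv by (simp add: sh_def)
      next
        case (Suc k')
        hence "sh 1 k = Suc (Suc k')" by (simp add: sh_def)
        thus ?thesis using LLS[of "Suc k'" j] FAB[of k' j] Suc k j by simp
      qed
    qed
    have colvL: "\<forall>k<Suc ?n. Lam $$ (k,v) = (if k = 1 then 1 else 0)"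
    proof (intro allI impI)
      fix k assume k: "k < Suc ?n"
      show "Lam $$ (k,v) = (if k = 1 then 1 else 0)"
      proof (cases k)
        case 0 thus ?thesis using LL0[OF v] by simp
      next
        case (Suc k')
        thus ?thesis using LLS[of k' v] k v FBv0 FBvS[of "k' - 1"] by (cases k') auto
      qed
    qed
    have colmL: "\<forall>k<Suc ?n. Lam $$ (k,m) = (if k = 0 then 1 else 0)" using LLm by blast
    have "finite \<sigma> \<and> \<sigma> \<subseteq> {..<Suc m} \<and> bas (Suc ?n) (\<lambda>k j. Lam $$ (k,j)) \<sigma>"
      using wedge_cases[OF sc dimb sw cs v]
    proof (elim disjE exE conjE)
      fix \<tau> assume e: "\<sigma> = insert m (insert v \<tau>)" and t: "insert v \<tau> \<in> K" "v \<notin> \<tau>" "card (insert v \<tau>) = ?n"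
      have st: "insert v \<tau> \<subseteq> {..<m}" using sub[OF t(1)] .
      have ft: "finite \<tau>" using fin[OF t(1)] by simp
      have mt: "m \<notin> insert v \<tau>" using st by auto
      have b1: "bas ?n (\<lambda>k j. A' $$ (k,j)) (insert v \<tau>)" using bA[OF t(1) t(3)] .
      have b2: "bas n0 (\<lambda>k j. A' $$ (Suc k,j)) \<tau>"
      proof (rule bas_remove[OF b1 ft t(2), of 0])
        show "\<forall>k<n0. \<forall>j\<in>\<tau>. A' $$ (sh 0 k, j) = A' $$ (Suc k, j)" by (simp add: sh_def)
        show "\<forall>k<Suc n0. A' $$ (k, v) = (if k = 0 then 1 else 0)"
          using FAv0 FAvS by (auto simp: less_Suc_eq_0_disj)
      qed simp
      have b3: "bas ?n (\<lambda>k j. B $$ (k,j)) (insert v \<tau>)"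
      proof (rule bas_insert[OF b2 ft t(2), of 0])
        show "\<forall>k<n0. \<forall>j\<in>\<tau>. B $$ (sh 0 k, j) = A' $$ (Suc k, j)"
          using FAB st by (auto simp: sh_def)
        show "\<forall>k<Suc n0. B $$ (k, v) = (if k = 0 then 1 else 0)"
          using FBv0 FBvS by (auto simp: less_Suc_eq_0_disj)
      qed simp
      have b4: "bas (Suc ?n) (\<lambda>k j. Lam $$ (k,j)) (insert m (insert v \<tau>))"
      proof (rule bas_insert[OF b3 _ mt, of 0])
        show "finite (insert v \<tau>)" using ft by simp
        show "\<forall>k<?n. \<forall>j\<in>insert v \<tau>. Lam $$ (sh 0 k, j) = B $$ (k, j)"
          using LLS st by (auto simp: sh_def)
        show "\<forall>k<Suc ?n. Lam $$ (k, m) = (if k = 0 then 1 else 0)" by (rule colmL)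
      qed simp
      show ?thesis using e b4 ft st v by auto
    next
      fix \<tau> assume e: "\<sigma> = insert v \<tau>" and t: "\<tau> \<in> K" "v \<notin> \<tau>" "card \<tau> = ?n"
      have st: "\<tau> \<subseteq> {..<m}" using sub[OF t(1)] .
      have ft: "finite \<tau>" using fin[OF t(1)] .
      have b4: "bas (Suc ?n) (\<lambda>k j. Lam $$ (k,j)) (insert v \<tau>)"
      proof (rule bas_insert[OF bA[OF t(1) t(3)] ft t(2), of 1])
        show "\<forall>k<?n. \<forall>j\<in>\<tau>. Lam $$ (sh 1 k, j) = A' $$ (k, j)"
          using rowA st t(2) by blast
        show "\<forall>k<Suc ?n. Lam $$ (k, v) = (if k = 1 then 1 else 0)" by (rule colvL)
      qed simp
      show ?thesis using e b4 ft st v by auto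
    next
      fix \<tau> assume e: "\<sigma> = insert m \<tau>" and t: "\<tau> \<in> K" "v \<notin> \<tau>" "card \<tau> = ?n"
      have st: "\<tau> \<subseteq> {..<m}" using sub[OF t(1)] .
      have ft: "finite \<tau>" using fin[OF t(1)] .
      have mt: "m \<notin> \<tau>" using st by auto
      have b4: "bas (Suc ?n) (\<lambda>k j. Lam $$ (k,j)) (insert m \<tau>)"
      proof (rule bas_insert[OF bB[OF t(1) t(3)] ft mt, of 0])
        show "\<forall>k<?n. \<forall>j\<in>\<tau>. Lam $$ (sh 0 k, j) = B $$ (k, j)"
          using LLS st by (auto simp: sh_def)
        show "\<forall>k<Suc ?n. Lam $$ (k, m) = (if k = 0 then 1 else 0)" by (rule colmL)
      qed simp
      show ?thesis using e b4 ft st by auto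
    qed
    thus "R_basis (Suc ?n) (col Lam) \<sigma>" using R_basis_bas[OF Lc] by blast
  qed
  have IP1: "is_proj (Suc ?n) (Suc m) Lam v (\<lambda>j. if j = v then m else j) A'"
    unfolding is_proj_def
  proof (rule bexI[of _ "Del 1 ?n"], intro conjI ballI)
    show "Del 1 ?n \<in> carrier_mat (Suc ?n - 1) (Suc ?n)" using Del_carrier by simp
    fix y :: "'a Matrix.vec" assume "y \<in> carrier_vec (Suc ?n - 1)"
    thus "\<exists>x\<in>carrier_vec (Suc ?n). Del 1 ?n *\<^sub>v x = y" using Del_surj by simp
  next
    fix x :: "'a Matrix.vec" assume x: "x \<in> carrier_vec (Suc ?n)"
    show "(Del 1 ?n *\<^sub>v x = 0\<^sub>v (Suc ?n - 1)) = (\<exists>c. x = c \<cdot>\<^sub>v col Lam v)"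
      using Del_ker[of 1 ?n x] x colv by simp
  next
    show "A' = Matrix.mat (Suc ?n - 1) (Suc m - 1) (\<lambda>(i, j). (Del 1 ?n * Lam) $$ (i, if j = v then m else j))"
    proof (rule eq_matI)
      fix i j assume "i < dim_row (Matrix.mat (Suc ?n - 1) (Suc m - 1) (\<lambda>(i, j). (Del 1 ?n * Lam) $$ (i, if j = v then m else j)) :: 'a mat)"
        "j < dim_col (Matrix.mat (Suc ?n - 1) (Suc m - 1) (\<lambda>(i, j). (Del 1 ?n * Lam) $$ (i, if j = v then m else j)) :: 'a mat)"
      hence i: "i < ?n" and j: "j < m" by auto
      have rj: "(if j = v then m else j) < Suc m" using j by simp
      have "(Del 1 ?n * Lam) $$ (i, if j = v then m else j) = Lam $$ (sh 1 i, if j = v then m else j)"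
        by (rule Del_mat[OF Lc i rj])
      also have "\<dots> = A' $$ (i,j)"
      proof (cases i)
        case 0 thus ?thesis using LLm[of 0] LL0[OF j] FAv0 by (simp add: sh_def)
      next
        case (Suc i')
        hence s: "sh 1 i = Suc (Suc i')" and i': "i' < n0" using i by (auto simp: sh_def)
        show ?thesis
        proof (cases "j = v")
          case True thus ?thesis using LLm[of "Suc (Suc i')"] s FAvS[OF i'] Suc i by simp
        next
          case False thus ?thesis using LLS[of "Suc i'" j] s FAB[OF i' j] Suc i j by simp
        qed
      qed
      finally show "A' $$ (i,j) = Matrix.mat (Suc ?n - 1) (Suc m - 1) (\<lambda>(i, j). (Del 1 ?n * Lam) $$ (i, if j = v then m else j)) $$ (i,j)"
        using i j by simp
    qed (use A'c in auto)
  qed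
  have IP2: "is_proj (Suc ?n) (Suc m) Lam m (\<lambda>j. j) B"
    unfolding is_proj_def
  proof (rule bexI[of _ "Del 0 ?n"], intro conjI ballI)
    show "Del 0 ?n \<in> carrier_mat (Suc ?n - 1) (Suc ?n)" using Del_carrier by simp
    fix y :: "'a Matrix.vec" assume "y \<in> carrier_vec (Suc ?n - 1)"
    thus "\<exists>x\<in>carrier_vec (Suc ?n). Del 0 ?n *\<^sub>v x = y" using Del_surj by simp
  next
    fix x :: "'a Matrix.vec" assume x: "x \<in> carrier_vec (Suc ?n)"
    show "(Del 0 ?n *\<^sub>v x = 0\<^sub>v (Suc ?n - 1)) = (\<exists>c. x = c \<cdot>\<^sub>v col Lam m)"
      using Del_ker[of 0 ?n x] x colm by simp
  next
    show "B = Matrix.mat (Suc ?n - 1) (Suc m - 1) (\<lambda>(i, j). (Del 0 ?n * Lam) $$ (i, j))"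
    proof (rule eq_matI)
      fix i j assume "i < dim_row (Matrix.mat (Suc ?n - 1) (Suc m - 1) (\<lambda>(i, j). (Del 0 ?n * Lam) $$ (i, j)) :: 'a mat)"
        "j < dim_col (Matrix.mat (Suc ?n - 1) (Suc m - 1) (\<lambda>(i, j). (Del 0 ?n * Lam) $$ (i, j)) :: 'a mat)"
      hence i: "i < ?n" and j: "j < m" by auto
      have j': "j < Suc m" using j by simp
      have "(Del 0 ?n * Lam) $$ (i, j) = Lam $$ (sh 0 i, j)" by (rule Del_mat[OF Lc i j'])
      also have "\<dots> = B $$ (i,j)" using LLS[OF i j] by (simp add: sh_def)
      finally show "B $$ (i,j) = Matrix.mat (Suc ?n - 1) (Suc m - 1) (\<lambda>(i, j). (Del 0 ?n * Lam) $$ (i, j)) $$ (i,j)"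
        using i j by simp
    qed (use Bc in auto)
  qed
  have DJ1: "DJ_equiv ?n A' l1"
    unfolding DJ_equiv_def
  proof (intro conjI bexI[of _ G1'])
    show "A' \<in> carrier_mat ?n (dim_col A')" using A'c by simp
    show "G1' \<in> carrier_mat ?n ?n" by (rule G1'(1))
    show "invertible_mat G1'" by (rule inv_inv[OF G1c G1'(1) G1'(2,3)])
    have "G1' * A' = (G1' * G1) * l1" unfolding A'G using G1'(1) G1c l1 by (simp add: assoc_mult_mat[OF G1'(1) G1c l1])
    also have "\<dots> = l1" using G1'(3) l1 by simp
    finally show "G1' * A' = l1" .
  qed
  have DJ2: "DJ_equiv ?n B l2"
    unfolding DJ_equiv_def
  proof (intro conjI bexI[of _ g2'])
    show "B \<in> carrier_mat ?n (dim_col B)" using Bc by simp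
    show "g2' \<in> carrier_mat ?n ?n" by (rule g2'(1))
    show "invertible_mat g2'" by (rule inv_inv[OF g2(1) g2'(1) g2'(2,3)])
    have "g2' * B = (g2' * g2) * l2" unfolding B_def by (simp add: assoc_mult_mat[OF g2'(1) g2(1) l2])
    also have "\<dots> = l2" using g2'(3) l2 by simp
    finally show "g2' * B = l2" .
  qed
  show ?thesis unfolding pre_edge_def using CM IP1 IP2 DJ1 DJ2 by auto
qed

lemma mv_smult:
  fixes A :: "'a::comm_ring_1 mat"
  assumes "A \<in> carrier_mat nr nc" "v \<in> carrier_vec nc"
  shows "A *\<^sub>v (k \<cdot>\<^sub>v v) = k \<cdot>\<^sub>v (A *\<^sub>v v)"
  by (rule eq_vecI) (use assms in auto)

lemma mv_unit:
  fixes A :: "'a::comm_ring_1 mat"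
  assumes "A \<in> carrier_mat nr nc" "j < nc"
  shows "A *\<^sub>v unit_vec nc j = col A j"
  by (rule eq_vecI) (use assms in auto)

lemma bij_inv:
  fixes A :: "'a::comm_ring_1 mat"
  assumes A: "A \<in> carrier_mat N N" and sj: "\<forall>y\<in>carrier_vec N. \<exists>x\<in>carrier_vec N. A *\<^sub>v x = y"
    and ij: "\<forall>x\<in>carrier_vec N. A *\<^sub>v x = 0\<^sub>v N \<longrightarrow> x = 0\<^sub>v N"
  shows "invertible_mat A"
proof -
  define X where "X j = (SOME x. x \<in> carrier_vec N \<and> A *\<^sub>v x = unit_vec N j)" for j
  have X: "X j \<in> carrier_vec N \<and> A *\<^sub>v X j = unit_vec N j" for j
  proof -
    have "unit_vec N j \<in> carrier_vec N" by simp
    hence "\<exists>x. x \<in> carrier_vec N \<and> A *\<^sub>v x = unit_vec N j" using sj by blast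
    thus ?thesis unfolding X_def by (rule someI_ex)
  qed
  define B where "B = Matrix.mat N N (\<lambda>(i,j). X j $ i)"
  have Bc: "B \<in> carrier_mat N N" by (simp add: B_def)
  have colB: "\<And>j. j < N \<Longrightarrow> col B j = X j"
  proof -
    fix j assume j: "j < N"
    show "col B j = X j" by (rule eq_vecI) (use j X[of j] in \<open>auto simp: B_def\<close>)
  qed
  have AB: "A * B = 1\<^sub>m N"
  proof (rule eq_matI)
    fix i j assume "i < dim_row (1\<^sub>m N :: 'a mat)" "j < dim_col (1\<^sub>m N :: 'a mat)"
    hence i: "i < N" and j: "j < N" by auto
    have "(A * B) $$ (i,j) = row A i \<bullet> col B j" using A Bc i j by simp
    also have "\<dots> = (A *\<^sub>v X j) $ i" using A i colB[OF j] by simp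
    also have "\<dots> = (1\<^sub>m N :: 'a mat) $$ (i,j)" using X[of j] i j by simp
    finally show "(A * B) $$ (i,j) = (1\<^sub>m N :: 'a mat) $$ (i,j)" .
  qed (use A Bc in auto)
  have BA: "B * A = 1\<^sub>m N"
  proof (rule eq_matI)
    fix i j assume "i < dim_row (1\<^sub>m N :: 'a mat)" "j < dim_col (1\<^sub>m N :: 'a mat)"
    hence i: "i < N" and j: "j < N" by auto
    have cA: "col A j \<in> carrier_vec N" using A unfolding carrier_vec_def by simp
    have bc: "B *\<^sub>v col A j \<in> carrier_vec N" by (rule mult_mat_vec_carrier[OF Bc cA])
    have uc: "(unit_vec N j :: 'a Matrix.vec) \<in> carrier_vec N" by simp
    have "A *\<^sub>v (B *\<^sub>v col A j) = (A * B) *\<^sub>v col A j" using A Bc cA by simp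
    also have "\<dots> = col A j" using AB cA by simp
    also have "\<dots> = A *\<^sub>v unit_vec N j" using mv_unit[OF A j] by simp
    finally have e: "A *\<^sub>v (B *\<^sub>v col A j) = A *\<^sub>v unit_vec N j" .
    have "A *\<^sub>v (B *\<^sub>v col A j - unit_vec N j) = A *\<^sub>v (B *\<^sub>v col A j) - A *\<^sub>v unit_vec N j"
      by (rule mult_minus_distrib_mat_vec[OF A bc uc])
    also have "\<dots> = 0\<^sub>v N" unfolding e using A by (intro eq_vecI) auto
    finally have "B *\<^sub>v col A j - unit_vec N j = 0\<^sub>v N" using ij bc uc by auto
    hence "(B *\<^sub>v col A j - unit_vec N j) $ i = 0" using i by simp
    hence bu: "(B *\<^sub>v col A j) $ i = unit_vec N j $ i" using i bc uc by simp
    have "(B * A) $$ (i,j) = row B i \<bullet> col A j" using A Bc i j by simp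
    also have "\<dots> = (B *\<^sub>v col A j) $ i" using Bc i by simp
    finally show "(B * A) $$ (i,j) = (1\<^sub>m N :: 'a mat) $$ (i,j)" using bu i j by simp
  qed (use A Bc in auto)
  show ?thesis by (rule invI[OF A Bc AB BA])
qed

definition Ins :: "nat \<Rightarrow> nat \<Rightarrow> 'a::comm_ring_1 mat" where
  "Ins r n = Matrix.mat (Suc n) n (\<lambda>(k,l). if k = sh r l then 1 else 0)"

lemma Ins_carrier: "Ins r n \<in> carrier_mat (Suc n) n" by (simp add: Ins_def)

lemma Ins_vec:
  assumes z: "z \<in> carrier_vec n" and k: "k < Suc n" and r: "r \<le> n"
  shows "((Ins r n :: 'a::comm_ring_1 mat) *\<^sub>v z) $ k = (if k = r then 0 else z $ (if k < r then k else k - 1))"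
proof -
  have e: "((Ins r n :: 'a mat) *\<^sub>v z) $ k = (\<Sum>l\<in>{0..<n}. (if k = sh r l then 1 else 0) * z $ l)"
    using z k by (auto simp: Ins_def scalar_prod_def intro!: sum.cong)
  show ?thesis
  proof (cases "k = r")
    case True
    have "(\<Sum>l\<in>{0..<n}. (if k = sh r l then 1 else 0) * z $ l) = 0"
      using True by (intro sum.neutral) (auto simp: sh_def)
    thus ?thesis using e True by simp
  next
    case False
    define k' where "k' = (if k < r then k else k - 1)"
    have k': "k' < n" using k False r by (auto simp: k'_def)
    have iff: "\<And>l. (k = sh r l) = (l = k')" using False by (auto simp: k'_def sh_def)
    have "(\<Sum>l\<in>{0..<n}. (if k = sh r l then 1 else 0) * z $ l) = (\<Sum>l\<in>{0..<n}. (if l = k' then 1 else 0) * z $ l)"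
      using iff by simp
    also have "\<dots> = z $ k'" by (rule delta_sum[OF k'])
    finally show ?thesis using e False by (simp add: k'_def)
  qed
qed

lemma Del_Ins: "r \<le> n \<Longrightarrow> z \<in> carrier_vec n \<Longrightarrow> (Del r n :: 'a::comm_ring_1 mat) *\<^sub>v ((Ins r n :: 'a mat) *\<^sub>v z) = z"
proof -
  assume r: "r \<le> n" and z: "z \<in> carrier_vec n"
  have ic: "(Ins r n :: 'a mat) *\<^sub>v z \<in> carrier_vec (Suc n)" by (rule mult_mat_vec_carrier[OF Ins_carrier z])
  show ?thesis
  proof (rule eq_vecI)
    fix i assume "i < dim_vec z"
    hence i: "i < n" using z by simp
    show "(Del r n *\<^sub>v (Ins r n *\<^sub>v z)) $ i = z $ i"
      using Del_vec[OF i ic] Ins_vec[OF z sh_lt[OF i] r] sh_ne[of r i] by (simp add: sh_def)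
  qed (use z in \<open>simp add: Del_def\<close>)
qed

lemma Ins_Del:
  assumes x: "x \<in> carrier_vec (Suc n)" and r: "r \<le> n"
  shows "x = (Ins r n :: 'a::comm_ring_1 mat) *\<^sub>v ((Del r n :: 'a mat) *\<^sub>v x) + x $ r \<cdot>\<^sub>v unit_vec (Suc n) r"
proof (rule eq_vecI)
  fix k assume "k < dim_vec ((Ins r n :: 'a mat) *\<^sub>v ((Del r n :: 'a mat) *\<^sub>v x) + x $ r \<cdot>\<^sub>v unit_vec (Suc n) r)"
  hence k: "k < Suc n" by (simp add: Ins_def)
  have dc: "(Del r n :: 'a mat) *\<^sub>v x \<in> carrier_vec n" by (rule mult_mat_vec_carrier[OF Del_carrier x])
  show "x $ k = ((Ins r n :: 'a mat) *\<^sub>v ((Del r n :: 'a mat) *\<^sub>v x) + x $ r \<cdot>\<^sub>v unit_vec (Suc n) r) $ k"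
  proof (cases "k = r")
    case True thus ?thesis using k Ins_vec[OF dc k r] by (simp add: Ins_def)
  next
    case False
    define k' where "k' = (if k < r then k else k - 1)"
    have k': "k' < n" using k False r by (auto simp: k'_def)
    have sk: "sh r k' = k" using False by (auto simp: k'_def sh_def)
    have "((Ins r n :: 'a mat) *\<^sub>v ((Del r n :: 'a mat) *\<^sub>v x)) $ k = x $ k"
      using Ins_vec[OF dc k r] False Del_vec[OF k' x, of r] sk by (simp add: k'_def)
    thus ?thesis using k False r by (simp add: Ins_def)
  qed
qed (use x in \<open>simp add: Ins_def\<close>)


lemma kill:
  fixes F W T :: "'a::comm_ring_1 mat"
  assumes F: "F \<in> carrier_mat n (Suc n)"
    and Fs: "\<forall>y\<in>carrier_vec n. \<exists>x\<in>carrier_vec (Suc n). F *\<^sub>v x = y"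
    and Fk: "\<forall>x\<in>carrier_vec (Suc n). F *\<^sub>v x = 0\<^sub>v n \<longleftrightarrow> (\<exists>c. x = c \<cdot>\<^sub>v a)"
    and W: "W \<in> carrier_mat (Suc n) (Suc n)" and T: "T \<in> carrier_mat (Suc n) (Suc n)"
    and WT: "W * T = 1\<^sub>m (Suc n)" and TW: "T * W = 1\<^sub>m (Suc n)"
    and r: "r \<le> n" and Wr: "col W r = a"
  shows "\<exists>H\<in>carrier_mat n n. invertible_mat H \<and> (\<forall>x\<in>carrier_vec (Suc n). F *\<^sub>v (W *\<^sub>v x) = H *\<^sub>v ((Del r n :: 'a mat) *\<^sub>v x))"
proof -
  let ?I = "Ins r n :: 'a mat"
  let ?D = "Del r n :: 'a mat"
  define H where "H = F * (W * ?I)"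
  have Hc: "H \<in> carrier_mat n n" unfolding H_def using F W Ins_carrier by (intro mult_carrier_mat) auto
  have Hv: "\<And>z. z \<in> carrier_vec n \<Longrightarrow> H *\<^sub>v z = F *\<^sub>v (W *\<^sub>v (?I *\<^sub>v z))"
  proof -
    fix z :: "'a Matrix.vec" assume z: "z \<in> carrier_vec n"
    have "H *\<^sub>v z = F *\<^sub>v ((W * ?I) *\<^sub>v z)" unfolding H_def
      by (rule assoc_mult_mat_vec[OF F mult_carrier_mat[OF W Ins_carrier] z])
    also have "(W * ?I) *\<^sub>v z = W *\<^sub>v (?I *\<^sub>v z)" by (rule assoc_mult_mat_vec[OF W Ins_carrier z])
    finally show "H *\<^sub>v z = F *\<^sub>v (W *\<^sub>v (?I *\<^sub>v z))" .
  qed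
  have ac: "a \<in> carrier_vec (Suc n)" using Wr W unfolding carrier_vec_def by auto
  have We: "W *\<^sub>v unit_vec (Suc n) r = a" using mv_unit[OF W, of r] r Wr by simp
  have TWv: "\<And>p. p \<in> carrier_vec (Suc n) \<Longrightarrow> T *\<^sub>v (W *\<^sub>v p) = p"
  proof -
    fix p :: "'a Matrix.vec" assume p: "p \<in> carrier_vec (Suc n)"
    have "T *\<^sub>v (W *\<^sub>v p) = (T * W) *\<^sub>v p" using T W p by simp
    thus "T *\<^sub>v (W *\<^sub>v p) = p" using TW p by simp
  qed
  have WTv: "\<And>p. p \<in> carrier_vec (Suc n) \<Longrightarrow> W *\<^sub>v (T *\<^sub>v p) = p"
  proof -
    fix p :: "'a Matrix.vec" assume p: "p \<in> carrier_vec (Suc n)"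
    have "W *\<^sub>v (T *\<^sub>v p) = (W * T) *\<^sub>v p" using T W p by simp
    thus "W *\<^sub>v (T *\<^sub>v p) = p" using WT p by simp
  qed
  have C1: "\<forall>x\<in>carrier_vec (Suc n). F *\<^sub>v (W *\<^sub>v x) = H *\<^sub>v (?D *\<^sub>v x)"
  proof
    fix x :: "'a Matrix.vec" assume x: "x \<in> carrier_vec (Suc n)"
    have dc: "?D *\<^sub>v x \<in> carrier_vec n" by (rule mult_mat_vec_carrier[OF Del_carrier x])
    have ic: "?I *\<^sub>v (?D *\<^sub>v x) \<in> carrier_vec (Suc n)" by (rule mult_mat_vec_carrier[OF Ins_carrier dc])
    have uc: "x $ r \<cdot>\<^sub>v unit_vec (Suc n) r \<in> carrier_vec (Suc n)" by simp
    have wic: "W *\<^sub>v (?I *\<^sub>v (?D *\<^sub>v x)) \<in> carrier_vec (Suc n)" by (rule mult_mat_vec_carrier[OF W ic])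
    have wuc: "W *\<^sub>v (x $ r \<cdot>\<^sub>v unit_vec (Suc n) r) \<in> carrier_vec (Suc n)" by (rule mult_mat_vec_carrier[OF W uc])
    have "W *\<^sub>v x = W *\<^sub>v (?I *\<^sub>v (?D *\<^sub>v x) + x $ r \<cdot>\<^sub>v unit_vec (Suc n) r)"
      using Ins_Del[OF x r] by simp
    also have "\<dots> = W *\<^sub>v (?I *\<^sub>v (?D *\<^sub>v x)) + W *\<^sub>v (x $ r \<cdot>\<^sub>v unit_vec (Suc n) r)"
      by (rule mult_add_distrib_mat_vec[OF W ic uc])
    finally have e1: "W *\<^sub>v x = W *\<^sub>v (?I *\<^sub>v (?D *\<^sub>v x)) + W *\<^sub>v (x $ r \<cdot>\<^sub>v unit_vec (Suc n) r)" .
    have e2: "W *\<^sub>v (x $ r \<cdot>\<^sub>v unit_vec (Suc n) r) = x $ r \<cdot>\<^sub>v a"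
      using mv_smult[OF W, of "unit_vec (Suc n) r" "x $ r"] We by simp
    have e3: "F *\<^sub>v (x $ r \<cdot>\<^sub>v a) = 0\<^sub>v n" using Fk ac by auto
    have "F *\<^sub>v (W *\<^sub>v x) = F *\<^sub>v (W *\<^sub>v (?I *\<^sub>v (?D *\<^sub>v x))) + F *\<^sub>v (W *\<^sub>v (x $ r \<cdot>\<^sub>v unit_vec (Suc n) r))"
      unfolding e1 by (rule mult_add_distrib_mat_vec[OF F wic wuc])
    also have "\<dots> = F *\<^sub>v (W *\<^sub>v (?I *\<^sub>v (?D *\<^sub>v x)))" unfolding e2 e3
      by (rule right_zero_vec) (rule mult_mat_vec_carrier[OF F wic])
    also have "\<dots> = H *\<^sub>v (?D *\<^sub>v x)" using Hv[OF dc] by simp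
    finally show "F *\<^sub>v (W *\<^sub>v x) = H *\<^sub>v (?D *\<^sub>v x)" .
  qed
  have Hi: "invertible_mat H"
  proof (rule bij_inv[OF Hc])
    show "\<forall>y\<in>carrier_vec n. \<exists>x\<in>carrier_vec n. H *\<^sub>v x = y"
    proof
      fix y :: "'a Matrix.vec" assume y: "y \<in> carrier_vec n"
      obtain x where x: "x \<in> carrier_vec (Suc n)" "F *\<^sub>v x = y" using Fs y by blast
      have tx: "T *\<^sub>v x \<in> carrier_vec (Suc n)" by (rule mult_mat_vec_carrier[OF T x(1)])
      have "y = F *\<^sub>v (W *\<^sub>v (T *\<^sub>v x))" using x WTv[OF x(1)] by simp
      also have "\<dots> = H *\<^sub>v (?D *\<^sub>v (T *\<^sub>v x))" using C1 tx by blast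
      finally show "\<exists>x\<in>carrier_vec n. H *\<^sub>v x = y"
        using mult_mat_vec_carrier[OF Del_carrier tx] by metis
    qed
    show "\<forall>z\<in>carrier_vec n. H *\<^sub>v z = 0\<^sub>v n \<longrightarrow> z = 0\<^sub>v n"
    proof (intro ballI impI)
      fix z :: "'a Matrix.vec" assume z: "z \<in> carrier_vec n" and hz: "H *\<^sub>v z = 0\<^sub>v n"
      have ic: "?I *\<^sub>v z \<in> carrier_vec (Suc n)" by (rule mult_mat_vec_carrier[OF Ins_carrier z])
      have wc: "W *\<^sub>v (?I *\<^sub>v z) \<in> carrier_vec (Suc n)" by (rule mult_mat_vec_carrier[OF W ic])
      have "F *\<^sub>v (W *\<^sub>v (?I *\<^sub>v z)) = 0\<^sub>v n" using hz Hv[OF z] by simp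
      then obtain c where c: "W *\<^sub>v (?I *\<^sub>v z) = c \<cdot>\<^sub>v a" using Fk wc by blast
      have uc: "c \<cdot>\<^sub>v unit_vec (Suc n) r \<in> carrier_vec (Suc n)" by simp
      have "W *\<^sub>v (c \<cdot>\<^sub>v unit_vec (Suc n) r) = c \<cdot>\<^sub>v a"
        using mv_smult[OF W, of "unit_vec (Suc n) r" c] We by simp
      hence "T *\<^sub>v (W *\<^sub>v (?I *\<^sub>v z)) = T *\<^sub>v (W *\<^sub>v (c \<cdot>\<^sub>v unit_vec (Suc n) r))" using c by simp
      hence iz: "?I *\<^sub>v z = c \<cdot>\<^sub>v unit_vec (Suc n) r" using TWv[OF ic] TWv[OF uc] by simp
      have "z = ?D *\<^sub>v (?I *\<^sub>v z)" using Del_Ins[OF r z] by simp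
      also have "\<dots> = 0\<^sub>v n" using Del_ker[OF r ic] iz by blast
      finally show "z = 0\<^sub>v n" .
    qed
  qed
  show ?thesis using Hc Hi C1 by blast
qed

lemma side:
  fixes F W T Lam g l :: "'a::comm_ring_1 mat"
  assumes F: "F \<in> carrier_mat n (Suc n)"
    and Fs: "\<forall>y\<in>carrier_vec n. \<exists>x\<in>carrier_vec (Suc n). F *\<^sub>v x = y"
    and Fk: "\<forall>x\<in>carrier_vec (Suc n). F *\<^sub>v x = 0\<^sub>v n \<longleftrightarrow> (\<exists>c. x = c \<cdot>\<^sub>v col Lam u)"
    and L: "Lam \<in> carrier_mat (Suc n) M"
    and W: "W \<in> carrier_mat (Suc n) (Suc n)" and T: "T \<in> carrier_mat (Suc n) (Suc n)"
    and WT: "W * T = 1\<^sub>m (Suc n)" and TW: "T * W = 1\<^sub>m (Suc n)"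
    and r: "r \<le> n" and Wr: "col W r = col Lam u"
    and mu: "mu = Matrix.mat n m (\<lambda>(i, j). (F * Lam) $$ (i, rm j))" and rm: "\<forall>j<m. rm j < M"
    and g: "g \<in> carrier_mat n n" "invertible_mat g" "g * mu = l"
  shows "\<exists>G\<in>carrier_mat n n. invertible_mat G \<and> (\<forall>i<n. \<forall>j<m. (G * l) $$ (i,j) = (T *\<^sub>v col Lam (rm j)) $ (sh r i))"
proof -
  obtain H where H: "H \<in> carrier_mat n n" "invertible_mat H"
    "\<forall>x\<in>carrier_vec (Suc n). F *\<^sub>v (W *\<^sub>v x) = H *\<^sub>v ((Del r n :: 'a mat) *\<^sub>v x)"
    using kill[OF F Fs Fk W T WT TW r Wr] by blast
  obtain H' where H': "H' \<in> carrier_mat n n" "H * H' = 1\<^sub>m n" "H' * H = 1\<^sub>m n"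
    using inv_obtain[OF H(1,2)] by blast
  obtain g' where g': "g' \<in> carrier_mat n n" "g * g' = 1\<^sub>m n" "g' * g = 1\<^sub>m n"
    using inv_obtain[OF g(1,2)] by blast
  have muc: "mu \<in> carrier_mat n m" using mu by simp
  define G where "G = H' * g'"
  have Gc: "G \<in> carrier_mat n n" unfolding G_def using H' g' by simp
  have Gi: "invertible_mat G" unfolding G_def
    by (rule inv_mult[OF H'(1) inv_inv[OF H(1) H'(1) H'(2,3)] g'(1) inv_inv[OF g(1) g'(1) g'(2,3)]])
  have Gl: "G * l = H' * mu"
  proof -
    have "G * l = (H' * g') * (g * mu)" unfolding G_def using g(3) by simp
    also have "\<dots> = H' * (g' * (g * mu))" using H'(1) g'(1) g(1) muc by (simp add: assoc_mult_mat[of _ n n _ n _ m])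
    also have "g' * (g * mu) = (g' * g) * mu" using g'(1) g(1) muc by (simp add: assoc_mult_mat[of _ n n _ n _ m])
    also have "\<dots> = mu" using g'(3) muc by simp
    finally show ?thesis .
  qed
  have main: "(G * l) $$ (i,j) = (T *\<^sub>v col Lam (rm j)) $ (sh r i)" if i: "i < n" and j: "j < m" for i j
  proof -
    let ?c = "col Lam (rm j)"
    have cc: "?c \<in> carrier_vec (Suc n)" using L unfolding carrier_vec_def by simp
    have tc: "T *\<^sub>v ?c \<in> carrier_vec (Suc n)" by (rule mult_mat_vec_carrier[OF T cc])
    have dc: "(Del r n :: 'a mat) *\<^sub>v (T *\<^sub>v ?c) \<in> carrier_vec n" by (rule mult_mat_vec_carrier[OF Del_carrier tc])
    have colmu: "col mu j = F *\<^sub>v ?c"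
    proof (rule eq_vecI)
      fix k assume "k < dim_vec (F *\<^sub>v ?c)"
      hence k: "k < n" using F by simp
      show "col mu j $ k = (F *\<^sub>v ?c) $ k" using k j F L rm mu by simp
    qed (use mu F in simp)
    have "F *\<^sub>v ?c = F *\<^sub>v (W *\<^sub>v (T *\<^sub>v ?c))"
    proof -
      have "W *\<^sub>v (T *\<^sub>v ?c) = (W * T) *\<^sub>v ?c" using W T cc by simp
      thus ?thesis using WT cc by simp
    qed
    also have "\<dots> = H *\<^sub>v ((Del r n :: 'a mat) *\<^sub>v (T *\<^sub>v ?c))" using H(3) tc by blast
    finally have e: "col mu j = H *\<^sub>v ((Del r n :: 'a mat) *\<^sub>v (T *\<^sub>v ?c))" using colmu by simp
    have "(G * l) $$ (i,j) = (H' * mu) $$ (i,j)" using Gl by simp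
    also have "\<dots> = row H' i \<bullet> col mu j" using H'(1) muc i j by simp
    also have "\<dots> = (H' *\<^sub>v col mu j) $ i" using H'(1) i by simp
    also have "H' *\<^sub>v col mu j = (H' * H) *\<^sub>v ((Del r n :: 'a mat) *\<^sub>v (T *\<^sub>v ?c))"
      unfolding e using H'(1) H(1) dc by simp
    also have "\<dots> = (Del r n :: 'a mat) *\<^sub>v (T *\<^sub>v ?c)" using H'(3) dc by simp
    also have "((Del r n :: 'a mat) *\<^sub>v (T *\<^sub>v ?c)) $ i = (T *\<^sub>v ?c) $ (sh r i)" by (rule Del_vec[OF i tc])
    finally show ?thesis .
  qed
  show ?thesis using Gc Gi main by blast
qed


lemma part2:
  fixes l1 l2 :: "'a::comm_ring_1 mat"
  assumes sc: "simplicial_complex_on m K" and rho: "\<rho> \<in> K" and vr: "v \<in> \<rho>" and cr: "card \<rho> = Suc n0"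
    and v: "v < m"
    and c1: "char_map (Suc n0) m K l1" and c2: "char_map (Suc n0) m K l2"
    and pe: "pre_edge (Suc n0) m K v l1 l2"
  shows "Pr_equiv (Suc n0) l1 l2 v"
proof -
  let ?n = "Suc n0"
  have l1: "l1 \<in> carrier_mat ?n m" and l2: "l2 \<in> carrier_mat ?n m"
    using c1 c2 unfolding char_map_def by auto
  obtain Lam mu1 mu2 where CM: "char_map (Suc ?n) (Suc m) (wedge K v m) Lam"
    and IP1: "is_proj (Suc ?n) (Suc m) Lam v (\<lambda>j. if j = v then m else j) mu1" and DJ1: "DJ_equiv ?n mu1 l1"
    and IP2: "is_proj (Suc ?n) (Suc m) Lam m (\<lambda>j. j) mu2" and DJ2: "DJ_equiv ?n mu2 l2"
    using pe unfolding pre_edge_def by auto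
  have Lc: "Lam \<in> carrier_mat (Suc ?n) (Suc m)" using CM unfolding char_map_def by auto
  have sub: "\<And>\<tau>. \<tau> \<in> K \<Longrightarrow> \<tau> \<subseteq> {..<m}" using sc unfolding simplicial_complex_on_def by blast
  have down: "\<And>\<tau> \<tau>'. \<tau> \<in> K \<Longrightarrow> \<tau>' \<subseteq> \<tau> \<Longrightarrow> \<tau>' \<in> K" using sc unfolding simplicial_complex_on_def by blast
  have rs: "\<rho> \<subseteq> {..<m}" by (rule sub[OF rho])
  have fr: "finite \<rho>" using rs finite_subset by blast
  have mr: "m \<notin> \<rho>" using rs by auto
  define \<tau>' where "\<tau>' = \<rho> - {v}"
  have ft: "finite \<tau>'" using fr by (simp add: \<tau>'_def)
  have ct: "card \<tau>' = n0" using cr fr vr by (simp add: \<tau>'_def)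
  have vt: "v \<notin> \<tau>'" and mt: "m \<notin> \<tau>'" using mr by (auto simp: \<tau>'_def)
  have tl: "\<tau>' \<in> link K {v}" unfolding link_def
  proof (intro CollectI conjI)
    show "\<tau>' \<in> K" using down[OF rho] by (simp add: \<tau>'_def)
    show "\<tau>' \<inter> {v} = {}" by (auto simp: \<tau>'_def)
    have "\<tau>' \<union> {v} = \<rho>" using vr by (auto simp: \<tau>'_def)
    thus "\<tau>' \<union> {v} \<in> K" using rho by simp
  qed
  define \<sigma>0 where "\<sigma>0 = insert m (insert v \<tau>')"
  have s0eq: "\<sigma>0 = {v, m} \<union> \<tau>'" by (auto simp: \<sigma>0_def)
  have s0w: "\<sigma>0 \<in> wedge K v m" unfolding wedge_def s0eq using tl by blast
  have s0c: "card \<sigma>0 = Suc ?n" using ft ct vt mt v by (simp add: \<sigma>0_def)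
  have s0s: "\<sigma>0 \<subseteq> {..<Suc m}" using rs v by (auto simp: \<sigma>0_def \<tau>'_def)
  have "R_basis (Suc ?n) (col Lam) \<sigma>0" using CM s0w s0c unfolding char_map_def by blast
  hence b0: "bas (Suc ?n) (\<lambda>k j. Lam $$ (k,j)) \<sigma>0" using R_basis_bas[OF Lc s0s] by blast
  obtain e where e: "bij_betw e {0..<n0} \<tau>'" using ex_bij_betw_nat_finite[OF ft] ct by auto
  define \<pi> where "\<pi> k = (if k = 0 then m else if k = 1 then v else e (k - 2))" for k
  have ein: "\<And>k. k < n0 \<Longrightarrow> e k \<in> \<tau>'" using e unfolding bij_betw_def by auto
  have \<pi>in: "\<And>l. l < Suc ?n \<Longrightarrow> \<pi> l \<in> \<sigma>0"
  proof -
    fix l assume l: "l < Suc ?n"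
    show "\<pi> l \<in> \<sigma>0"
    proof (cases "l < 2")
      case True thus ?thesis by (auto simp: \<pi>_def \<sigma>0_def)
    next
      case False
      hence "l - 2 < n0" using l by simp
      thus ?thesis using False ein by (auto simp: \<pi>_def \<sigma>0_def)
    qed
  qed
  have sum\<pi>: "(\<Sum>j\<in>\<sigma>0. f j) = (\<Sum>l<Suc ?n. f (\<pi> l))" for f :: "nat \<Rightarrow> 'a"
  proof -
    have "(\<Sum>j\<in>\<sigma>0. f j) = f m + (f v + (\<Sum>j\<in>\<tau>'. f j))"
      using ft vt mt v by (simp add: \<sigma>0_def)
    also have "(\<Sum>j\<in>\<tau>'. f j) = (\<Sum>l\<in>{0..<n0}. f (e l))"
      by (rule sum.reindex_bij_betw[OF e, symmetric])
    also have "(\<Sum>l<Suc ?n. f (\<pi> l)) = f (\<pi> 0) + (f (\<pi> (Suc 0)) + (\<Sum>l<n0. f (\<pi> (Suc (Suc l)))))"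
      by (simp only: sum.lessThan_Suc_shift)
    moreover have "(\<Sum>l<n0. f (\<pi> (Suc (Suc l)))) = (\<Sum>l\<in>{0..<n0}. f (e l))"
      by (simp add: \<pi>_def atLeast0LessThan)
    ultimately show ?thesis by (simp add: \<pi>_def)
  qed
  define W :: "'a mat" where "W = Matrix.mat (Suc ?n) (Suc ?n) (\<lambda>(k,l). Lam $$ (k, \<pi> l))"
  have Wc: "W \<in> carrier_mat (Suc ?n) (Suc ?n)" by (simp add: W_def)
  have Wv: "\<And>x k. x \<in> carrier_vec (Suc ?n) \<Longrightarrow> k < Suc ?n \<Longrightarrow> (W *\<^sub>v x) $ k = (\<Sum>l<Suc ?n. x $ l * Lam $$ (k, \<pi> l))"
    by (auto simp: W_def scalar_prod_def atLeast0LessThan mult.commute intro!: sum.cong)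
  have Wi: "invertible_mat W"
  proof (rule bij_inv[OF Wc])
    show "\<forall>y\<in>carrier_vec (Suc ?n). \<exists>x\<in>carrier_vec (Suc ?n). W *\<^sub>v x = y"
    proof
      fix y :: "'a Matrix.vec" assume y: "y \<in> carrier_vec (Suc ?n)"
      obtain c where c: "\<forall>k<Suc ?n. y $ k = (\<Sum>j\<in>\<sigma>0. c j * Lam $$ (k,j))"
        using bas_span[OF b0, of "\<lambda>k. y $ k"] by auto
      define x where "x = Matrix.vec (Suc ?n) (\<lambda>l. c (\<pi> l))"
      have xc: "x \<in> carrier_vec (Suc ?n)" by (simp add: x_def)
      have "W *\<^sub>v x = y"
      proof (rule eq_vecI)
        fix k assume "k < dim_vec y"
        hence k: "k < Suc ?n" using y by simp
        have "(W *\<^sub>v x) $ k = (\<Sum>l<Suc ?n. c (\<pi> l) * Lam $$ (k, \<pi> l))"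
          using Wv[OF xc k] by (simp add: x_def)
        also have "\<dots> = (\<Sum>j\<in>\<sigma>0. c j * Lam $$ (k,j))" by (rule sum\<pi>[symmetric])
        also have "\<dots> = y $ k" using c k by simp
        finally show "(W *\<^sub>v x) $ k = y $ k" .
      qed (use y Wc in simp)
      thus "\<exists>x\<in>carrier_vec (Suc ?n). W *\<^sub>v x = y" using xc by blast
    qed
    show "\<forall>x\<in>carrier_vec (Suc ?n). W *\<^sub>v x = 0\<^sub>v (Suc ?n) \<longrightarrow> x = 0\<^sub>v (Suc ?n)"
    proof (intro ballI impI)
      fix x :: "'a Matrix.vec" assume x: "x \<in> carrier_vec (Suc ?n)" and wx: "W *\<^sub>v x = 0\<^sub>v (Suc ?n)"
      define c where "c j = (if j = m then x $ 0 else if j = v then x $ 1 else x $ (Suc (Suc (inv_into {0..<n0} e j))))" for j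
      have inje: "inj_on e {0..<n0}" using e unfolding bij_betw_def by auto
      have cpi: "\<And>l. l < Suc ?n \<Longrightarrow> c (\<pi> l) = x $ l"
      proof -
        fix l assume l: "l < Suc ?n"
        show "c (\<pi> l) = x $ l"
        proof (cases "l < 2")
          case True thus ?thesis using v by (cases l) (auto simp: c_def \<pi>_def)
        next
          case False
          hence l2: "l - 2 < n0" using l by simp
          have "e (l - 2) \<in> \<tau>'" by (rule ein[OF l2])
          hence "e (l - 2) \<noteq> m" "e (l - 2) \<noteq> v" using vt mt by auto
          moreover have "inv_into {0..<n0} e (e (l - 2)) = l - 2" using inv_into_f_f[OF inje] l2 by simp
          moreover have "Suc (Suc (l - 2)) = l" using False by simp
          ultimately show ?thesis using False by (simp add: c_def \<pi>_def)
        qed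
      qed
      have zero: "(\<Sum>j\<in>\<sigma>0. c j * Lam $$ (k,j)) = 0" if k: "k < Suc ?n" for k
      proof -
        have "(\<Sum>j\<in>\<sigma>0. c j * Lam $$ (k,j)) = (\<Sum>l<Suc ?n. c (\<pi> l) * Lam $$ (k, \<pi> l))" by (rule sum\<pi>)
        also have "\<dots> = (\<Sum>l<Suc ?n. x $ l * Lam $$ (k, \<pi> l))" using cpi by simp
        also have "\<dots> = (W *\<^sub>v x) $ k" using Wv[OF x k] by simp
        also have "\<dots> = 0" using wx k by simp
        finally show ?thesis .
      qed
      have "\<forall>j\<in>\<sigma>0. c j = 0" using bas_indep[OF b0 zero] by blast
      thus "x = 0\<^sub>v (Suc ?n)"
      proof -
        assume cz: "\<forall>j\<in>\<sigma>0. c j = 0"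
        show ?thesis
        proof (rule eq_vecI)
          fix l assume "l < dim_vec (0\<^sub>v (Suc ?n) :: 'a Matrix.vec)"
          hence l: "l < Suc ?n" by simp
          have "x $ l = c (\<pi> l)" using cpi[OF l] by simp
          also have "\<dots> = 0" using cz \<pi>in[OF l] by blast
          finally show "x $ l = 0\<^sub>v (Suc ?n) $ l" using l by simp
        qed (use x in simp)
      qed
    qed
  qed
  obtain T where T: "T \<in> carrier_mat (Suc ?n) (Suc ?n)" "W * T = 1\<^sub>m (Suc ?n)" "T * W = 1\<^sub>m (Suc ?n)"
    using inv_obtain[OF Wc Wi] by blast
  have colW0: "col W 0 = col Lam m" by (rule eq_vecI) (use Lc in \<open>auto simp: W_def \<pi>_def\<close>)
  have colW1: "col W 1 = col Lam v" by (rule eq_vecI) (use Lc v in \<open>auto simp: W_def \<pi>_def\<close>)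
  have Te: "\<And>k. k < Suc ?n \<Longrightarrow> T *\<^sub>v col W k = unit_vec (Suc ?n) k"
  proof -
    fix k assume k: "k < Suc ?n"
    have "T *\<^sub>v col W k = T *\<^sub>v (W *\<^sub>v unit_vec (Suc ?n) k)" using mv_unit[OF Wc k] by simp
    also have "\<dots> = (T * W) *\<^sub>v unit_vec (Suc ?n) k" using T(1) Wc by simp
    also have "\<dots> = unit_vec (Suc ?n) k" using T(3) by simp
    finally show "T *\<^sub>v col W k = unit_vec (Suc ?n) k" .
  qed
  have Tm: "T *\<^sub>v col Lam m = unit_vec (Suc ?n) 0" using Te[of 0] colW0 by simp
  have Tv: "T *\<^sub>v col Lam v = unit_vec (Suc ?n) 1" using Te[of 1] colW1 by simp
  obtain F1 where F1: "F1 \<in> carrier_mat ?n (Suc ?n)"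
    "\<forall>y\<in>carrier_vec ?n. \<exists>x\<in>carrier_vec (Suc ?n). F1 *\<^sub>v x = y"
    "\<forall>x\<in>carrier_vec (Suc ?n). F1 *\<^sub>v x = 0\<^sub>v ?n \<longleftrightarrow> (\<exists>c. x = c \<cdot>\<^sub>v col Lam v)"
    "mu1 = Matrix.mat ?n m (\<lambda>(i, j). (F1 * Lam) $$ (i, if j = v then m else j))"
    using IP1 unfolding is_proj_def by auto
  obtain F2 where F2: "F2 \<in> carrier_mat ?n (Suc ?n)"
    "\<forall>y\<in>carrier_vec ?n. \<exists>x\<in>carrier_vec (Suc ?n). F2 *\<^sub>v x = y"
    "\<forall>x\<in>carrier_vec (Suc ?n). F2 *\<^sub>v x = 0\<^sub>v ?n \<longleftrightarrow> (\<exists>c. x = c \<cdot>\<^sub>v col Lam m)"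
    "mu2 = Matrix.mat ?n m (\<lambda>(i, j). (F2 * Lam) $$ (i, j))"
    using IP2 unfolding is_proj_def by auto
  obtain g1 where g1: "g1 \<in> carrier_mat ?n ?n" "invertible_mat g1" "g1 * mu1 = l1"
    using DJ1 unfolding DJ_equiv_def by auto
  obtain g2 where g2: "g2 \<in> carrier_mat ?n ?n" "invertible_mat g2" "g2 * mu2 = l2"
    using DJ2 unfolding DJ_equiv_def by auto
  have rm1: "\<forall>j<m. (if j = v then m else j) < Suc m" by simp
  have rm2: "\<forall>j<m. j < Suc m" by simp
  obtain G1 where G1: "G1 \<in> carrier_mat ?n ?n" "invertible_mat G1"
    "\<forall>i<?n. \<forall>j<m. (G1 * l1) $$ (i,j) = (T *\<^sub>v col Lam (if j = v then m else j)) $ (sh 1 i)"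
    using side[OF F1(1,2,3) Lc Wc T(1,2,3) _ colW1 F1(4) rm1 g1] by auto
  obtain G2 where G2: "G2 \<in> carrier_mat ?n ?n" "invertible_mat G2"
    "\<forall>i<?n. \<forall>j<m. (G2 * l2) $$ (i,j) = (T *\<^sub>v col Lam j) $ (sh 0 i)"
    using side[OF F2(1,2,3) Lc Wc T(1,2,3) _ colW0 F2(4) rm2 g2] by auto
  define P where "P = Matrix.mat n0 (m - 1) (\<lambda>(i, j). (G1 * l1) $$ (i + 1, if j < v then j else j + 1))"
  define P' where "P' = Matrix.mat n0 (m - 1) (\<lambda>(i, j). (G2 * l2) $$ (i + 1, if j < v then j else j + 1))"
  have PP: "P = P'"
  proof (rule eq_matI)
    fix i j assume "i < dim_row P'" "j < dim_col P'"
    hence i: "i < n0" and j: "j < m - 1" by (auto simp: P'_def)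
    define jj where "jj = (if j < v then j else j + 1)"
    have jj: "jj < m" "jj \<noteq> v" using j by (auto simp: jj_def)
    have "P $$ (i,j) = (G1 * l1) $$ (Suc i, jj)" using i j by (simp add: P_def jj_def)
    also have "\<dots> = (T *\<^sub>v col Lam jj) $ (Suc (Suc i))" using G1(3) i jj by (simp add: sh_def)
    also have "\<dots> = (G2 * l2) $$ (Suc i, jj)" using G2(3) i jj by (simp add: sh_def)
    also have "\<dots> = P' $$ (i,j)" using i j by (simp add: P'_def jj_def)
    finally show "P $$ (i,j) = P' $$ (i,j)" .
  qed (auto simp: P_def P'_def)
  have R1: "Pr_rel ?n l1 v P" unfolding Pr_rel_def
  proof (rule bexI[of _ G1], intro conjI allI impI)
    show "(G1 * l1) $$ (0, v) = 1" using G1(3) v Tm by (simp add: sh_def)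
    fix i assume "i < ?n" "i \<noteq> 0"
    thus "(G1 * l1) $$ (i, v) = 0" using G1(3) v Tm by (simp add: sh_def)
  next
    show "P = Matrix.mat (?n - 1) (dim_col l1 - 1) (\<lambda>(i, j). (G1 * l1) $$ (i + 1, if j < v then j else j + 1))"
      using l1 by (simp add: P_def)
  qed (use G1 in auto)
  have R2: "Pr_rel ?n l2 v P'" unfolding Pr_rel_def
  proof (rule bexI[of _ G2], intro conjI allI impI)
    show "(G2 * l2) $$ (0, v) = 1" using G2(3) v Tv by (simp add: sh_def)
    fix i assume "i < ?n" "i \<noteq> 0"
    thus "(G2 * l2) $$ (i, v) = 0" using G2(3) v Tv by (simp add: sh_def)
  next
    show "P' = Matrix.mat (?n - 1) (dim_col l2 - 1) (\<lambda>(i, j). (G2 * l2) $$ (i + 1, if j < v then j else j + 1))"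
      using l2 by (simp add: P'_def)
  qed (use G2 in auto)
  have hI: "invertible_mat (1\<^sub>m n0 :: 'a mat)" by (rule invI[of _ n0 "1\<^sub>m n0"]) auto
  have Pc: "P \<in> carrier_mat n0 (m - 1)" by (simp add: P_def)
  have "1\<^sub>m n0 * P = P'" using PP left_mult_one_mat[OF Pc] by simp
  hence "\<exists>h\<in>carrier_mat n0 n0. invertible_mat h \<and> h * P = P'" using hI by (intro bexI[of _ "1\<^sub>m n0"]) auto
  hence "\<exists>h\<in>carrier_mat (?n - 1) (?n - 1). invertible_mat h \<and> h * P = P'" by simp
  thus ?thesis unfolding Pr_equiv_def using R1 R2 by blast
qed


lemma card1_eq: "card A = 1 \<Longrightarrow> a \<in> A \<Longrightarrow> b \<in> A \<Longrightarrow> a = b"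
proof -
  assume "card A = 1" "a \<in> A" "b \<in> A"
  moreover obtain w where "A = {w}" using \<open>card A = 1\<close> by (rule card_1_singletonE)
  ultimately show "a = b" by simp
qed

lemma topo:
  fixes K :: "nat set set"
  assumes dimE: "DIM('e::euclidean_space) = n" and ss: "star_shaped_sphere TYPE('e) m K" and v: "v < m"
  shows "(\<forall>\<sigma>\<in>K. card \<sigma> \<le> n) \<and> (\<exists>\<rho>\<in>K. v \<in> \<rho> \<and> card \<rho> = n)"
proof -
  have ss': "simplicial_complex_on m K \<and>
     (\<exists>x::nat \<Rightarrow> 'e. geom_realization K x \<and> polyhedron K x homeomorphic sphere (0::'e) 1) \<and>
     (\<exists>(x::nat \<Rightarrow> 'e) p. geom_realization K x \<and>
        (\<forall>d. d \<noteq> 0 \<longrightarrow> card ({p + t *\<^sub>R d | t. t \<ge> 0} \<inter> polyhedron K x) = 1))"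
    using ss unfolding star_shaped_sphere_def .
  have sc: "simplicial_complex_on m K" using ss' by (rule conjunct1)
  obtain x' :: "nat \<Rightarrow> 'e" where gr': "geom_realization K x'" and hom: "polyhedron K x' homeomorphic sphere (0::'e) 1"
    using ss'[THEN conjunct2, THEN conjunct1] by (elim exE conjE)
  obtain x :: "nat \<Rightarrow> 'e" and p where gr: "geom_realization K x"
    and ray: "\<forall>d. d \<noteq> 0 \<longrightarrow> card ({p + t *\<^sub>R d | t. t \<ge> 0} \<inter> polyhedron K x) = 1"
    using ss'[THEN conjunct2, THEN conjunct2] by (elim exE conjE)
  have grA: "\<And>\<sigma>. \<sigma> \<in> K \<Longrightarrow> inj_on x \<sigma> \<and> \<not> affine_dependent (x ` \<sigma>)"
    using gr unfolding geom_realization_def by blast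
  have grB: "\<And>\<sigma> \<tau>. \<sigma> \<in> K \<Longrightarrow> \<tau> \<in> K \<Longrightarrow> convex hull (x ` \<sigma>) \<inter> convex hull (x ` \<tau>) = convex hull (x ` (\<sigma> \<inter> \<tau>))"
    using gr unfolding geom_realization_def by blast
  define P where "P = polyhedron K x"
  define R where "R d = {p + t *\<^sub>R d | t. t \<ge> 0} \<inter> P" for d
  have ray1: "\<And>d a b. d \<noteq> 0 \<Longrightarrow> a \<in> R d \<Longrightarrow> b \<in> R d \<Longrightarrow> a = b"
  proof -
    fix d a b assume d0: "d \<noteq> (0::'e)" and ab: "a \<in> R d" "b \<in> R d"
    have "card (R d) = 1" unfolding R_def P_def by (rule ray[rule_format, OF d0])
    thus "a = b" by (rule card1_eq[OF _ ab])
  qed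
  have Rin: "\<And>d t. t \<ge> 0 \<Longrightarrow> p + t *\<^sub>R d \<in> P \<Longrightarrow> p + t *\<^sub>R d \<in> R d"
  proof -
    fix d :: 'e and t :: real assume t: "t \<ge> 0" and tP: "p + t *\<^sub>R d \<in> P"
    have "p + t *\<^sub>R d \<in> {p + s *\<^sub>R d | s. s \<ge> 0}" by (rule CollectI, rule exI[of _ t], rule conjI[OF refl t])
    thus "p + t *\<^sub>R d \<in> R d" using tP unfolding R_def by (rule IntI)
  qed
  have sub: "\<And>\<tau>. \<tau> \<in> K \<Longrightarrow> \<tau> \<subseteq> {..<m}" using sc unfolding simplicial_complex_on_def by blast
  have fin: "\<And>\<tau>. \<tau> \<in> K \<Longrightarrow> finite \<tau>" using sub finite_subset by blast
  have sing: "\<And>i. i < m \<Longrightarrow> {i} \<in> K" using sc unfolding simplicial_complex_on_def by blast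
  have down: "\<And>\<tau> \<tau>'. \<tau> \<in> K \<Longrightarrow> \<tau>' \<subseteq> \<tau> \<Longrightarrow> \<tau>' \<in> K" using sc unfolding simplicial_complex_on_def by blast
  have Kfin: "finite K"
  proof (rule finite_subset)
    show "K \<subseteq> Pow {..<m}" using sub by blast
  qed simp
  have inP: "\<And>\<tau> y. \<tau> \<in> K \<Longrightarrow> y \<in> convex hull (x ` \<tau>) \<Longrightarrow> y \<in> P"
    unfolding P_def polyhedron_def by blast
  have xP: "\<And>i. i < m \<Longrightarrow> x i \<in> P"
  proof -
    fix i assume i: "i < m"
    have "x i \<in> convex hull (x ` {i})" by (simp add: hull_inc)
    thus "x i \<in> P" using inP[OF sing[OF i]] by blast
  qed
  have Pcases: "\<And>y. y \<in> P \<Longrightarrow> \<exists>\<tau>\<in>K. y \<in> convex hull (x ` \<tau>)" unfolding P_def polyhedron_def by blast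
  have npos: "n \<ge> 1" using dimE DIM_positive[where 'a='e] by simp
  have T1: "\<forall>\<sigma>\<in>K. card \<sigma> \<le> n"
  proof (rule ballI, rule ccontr)
    fix \<sigma> assume sK: "\<sigma> \<in> K" and nle: "\<not> card \<sigma> \<le> n"
    define S where "S = x ` \<sigma>"
    have injs: "inj_on x \<sigma>" and ind: "\<not> affine_dependent S" using grA[OF sK] unfolding S_def by auto
    have fS: "finite S" using fin[OF sK] by (simp add: S_def)
    have cS: "card S = card \<sigma>" using card_image[OF injs] by (simp add: S_def)
    have "\<not> card S \<ge> DIM('e) + 2" using affine_dependent_biggerset[OF fS] ind by blast
    hence cS': "card S = Suc (DIM('e))" using cS nle dimE by simp
    have "interior (convex hull S) \<noteq> {}" using interior_convex_hull_eq_empty[OF cS'] ind by simp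
    then obtain q0 where q0: "q0 \<in> interior (convex hull S)" by blast
    obtain e where e: "e > 0" "ball q0 e \<subseteq> interior (convex hull S)"
      using open_contains_ball[of "interior (convex hull S)"] q0 by blast
    obtain b :: 'e where b: "b \<in> Basis" using nonempty_Basis by blast
    have nb: "norm b = 1" using b by simp
    define q where "q = (if q0 = p then q0 + (e/2) *\<^sub>R b else q0)"
    have qp: "q \<noteq> p"
    proof (cases "q0 = p")
      case True
      have "(e/2) *\<^sub>R b \<noteq> 0" using e(1) nb by auto
      thus ?thesis using True by (simp add: q_def)
    next
      case False thus ?thesis by (simp add: q_def)
    qed
    have "q \<in> ball q0 e"
    proof (cases "q0 = p")
      case True
      have "dist q0 q = e/2" using True e(1) nb by (simp add: q_def dist_norm)
      thus ?thesis using e(1) by simp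
    next
      case False thus ?thesis using e(1) by (simp add: q_def)
    qed
    hence qi: "q \<in> interior (convex hull S)" using e(2) by blast
    obtain e' where e': "e' > 0" "ball q e' \<subseteq> interior (convex hull S)"
      using open_contains_ball[of "interior (convex hull S)"] qi by blast
    define d where "d = q - p"
    have d0: "d \<noteq> 0" using qp by (simp add: d_def)
    have nd: "norm d > 0" using d0 by simp
    define \<delta> where "\<delta> = e' / (2 * norm d)"
    have \<delta>: "\<delta> > 0" using e'(1) nd by (simp add: \<delta>_def)
    have img: "(\<lambda>t. p + t *\<^sub>R d) ` {1..1+\<delta>} \<subseteq> R d"
    proof
      fix z assume "z \<in> (\<lambda>t. p + t *\<^sub>R d) ` {1..1+\<delta>}"
      then obtain t where t: "t \<in> {1..1+\<delta>}" "z = p + t *\<^sub>R d" by blast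
      have "dist z q = norm ((t - 1) *\<^sub>R d)"
        unfolding t(2) d_def dist_norm by (simp add: algebra_simps)
      hence "dist q z = norm ((t - 1) *\<^sub>R d)" by (simp add: dist_commute)
      also have "\<dots> = \<bar>t - 1\<bar> * norm d" by simp
      also have "\<dots> \<le> \<delta> * norm d" using t(1) nd by (intro mult_right_mono) auto
      also have "\<dots> = e' / 2" using nd by (simp add: \<delta>_def)
      also have "\<dots> < e'" using e'(1) by simp
      finally have "z \<in> ball q e'" by simp
      hence "z \<in> convex hull S" using e'(2) interior_subset by blast
      hence "z \<in> P" using inP[OF sK] by (simp add: S_def)
      thus "z \<in> R d" using Rin[of t d] t by simp
    qed
    have "inj_on (\<lambda>t. p + t *\<^sub>R d) {1..1+\<delta>}" using d0 by (auto simp: inj_on_def)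
    hence "infinite ((\<lambda>t. p + t *\<^sub>R d) ` {1..1+\<delta>})"
      using \<delta> finite_imageD infinite_Icc[of 1 "1+\<delta>"] by auto
    hence "infinite (R d)" using img finite_subset by blast
    hence "card (R d) = 0" by simp
    moreover have "card (R d) = 1" unfolding R_def P_def by (rule ray[rule_format, OF d0])
    ultimately show False by simp
  qed
  have T2: "\<exists>\<rho>\<in>K. v \<in> \<rho> \<and> card \<rho> = n"
  proof (cases "p \<in> P")
    case True
    have Pp: "\<And>y. y \<in> P \<Longrightarrow> y = p"
    proof (rule ccontr)
      fix y assume yP: "y \<in> P" and yp: "y \<noteq> p"
      have d0: "y - p \<noteq> 0" using yp by simp
      have pR: "p \<in> R (y - p)" using Rin[of 0 "y - p"] True by simp
      have yR: "y \<in> R (y - p)" using Rin[of 1 "y - p"] yP by simp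
      have "p = y" by (rule ray1[OF d0 pR yR])
      thus False using yp by simp
    qed
    have c1: "\<And>\<sigma>. \<sigma> \<in> K \<Longrightarrow> card \<sigma> \<le> 1"
    proof -
      fix \<sigma> assume sK: "\<sigma> \<in> K"
      have injs: "inj_on x \<sigma>" using grA[OF sK] by blast
      have "x ` \<sigma> \<subseteq> {p}"
      proof
        fix z assume "z \<in> x ` \<sigma>"
        hence "z \<in> convex hull (x ` \<sigma>)" by (rule hull_inc)
        thus "z \<in> {p}" using Pp inP[OF sK] by blast
      qed
      hence "card (x ` \<sigma>) \<le> 1" using card_mono[of "{p}" "x ` \<sigma>"] by simp
      thus "card \<sigma> \<le> 1" using card_image[OF injs] by simp
    qed
    show ?thesis
    proof (cases "n = 1")
      case True thus ?thesis using sing[OF v] by (intro bexI[of _ "{v}"]) auto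
    next
      case False
      hence n2: "2 \<le> DIM('e)" using npos dimE by simp
      have "polyhedron K x' \<subseteq> x' ` {..<m}"
      proof
        fix z assume "z \<in> polyhedron K x'"
        then obtain \<sigma> where sK: "\<sigma> \<in> K" and z: "z \<in> convex hull (x' ` \<sigma>)" unfolding polyhedron_def by blast
        have "card \<sigma> \<le> 1" by (rule c1[OF sK])
        hence "\<sigma> = {} \<or> (\<exists>i. \<sigma> = {i})" using fin[OF sK] by (auto simp: le_Suc_eq card_1_singleton_iff)
        thus "z \<in> x' ` {..<m}"
        proof
          assume "\<sigma> = {}" thus ?thesis using z by simp
        next
          assume "\<exists>i. \<sigma> = {i}"
          then obtain i where i: "\<sigma> = {i}" by blast
          have "i < m" using sub[OF sK] i by auto
          thus ?thesis using z i by simp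
        qed
      qed
      hence fpol: "finite (polyhedron K x')" using finite_subset by blast
      have "sphere (0::'e) 1 homeomorphic polyhedron K x'" using hom homeomorphic_sym by blast
      hence fsph: "finite (sphere (0::'e) 1)" using homeomorphic_finite[OF fpol] by blast
      have sph: "sphere (0::'e) 1 = {} \<or> (\<exists>a. sphere (0::'e) 1 = {a})"
        using connected_finite_iff_sing[OF connected_sphere[OF n2]] fsph by blast
      obtain b :: 'e where b: "b \<in> Basis" using nonempty_Basis by blast
      have b0: "b \<noteq> 0" using b nonzero_Basis by blast
      have bs: "b \<in> sphere 0 1" "-b \<in> sphere 0 1" using b by auto
      have bnb: "b \<noteq> -b"
      proof
        assume bb: "b = -b"
        have "b + b = b + -b" using bb by (rule arg_cong[where f="\<lambda>z. b + z"])
        hence "(2::real) *\<^sub>R b = 0" by (simp add: scaleR_2)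
        thus False using b0 by simp
      qed
      have False
      proof (cases "sphere (0::'e) 1 = {}")
        case True thus False using bs by simp
      next
        case False
        then obtain a where a: "sphere (0::'e) 1 = {a}" using sph by blast
        have "b = a" using bs(1) a by simp
        moreover have "-b = a" using bs(2) a by simp
        ultimately show False using bnb by simp
      qed
      thus ?thesis ..
    qed
  next
    case False
    show ?thesis
    proof (rule ccontr)
      assume nex: "\<not> (\<exists>\<rho>\<in>K. v \<in> \<rho> \<and> card \<rho> = n)"
      have small: "\<And>\<tau>. \<tau> \<in> K \<Longrightarrow> v \<in> \<tau> \<Longrightarrow> card \<tau> < n" using nex T1 le_neq_implies_less by blast
      define C where "C \<tau> = {p + t *\<^sub>R (y - p) | t y. 0 \<le> t \<and> y \<in> convex hull (x ` \<tau>)}" for \<tau>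
      have cover: "\<And>z. \<exists>\<tau>\<in>K. z \<in> C \<tau>"
      proof -
        fix z
        show "\<exists>\<tau>\<in>K. z \<in> C \<tau>"
        proof (cases "z = p")
          case True
          have "x v \<in> convex hull (x ` {v})" by (simp add: hull_inc)
          hence "p + 0 *\<^sub>R (x v - p) \<in> C {v}" unfolding C_def by blast
          thus ?thesis using True sing[OF v] by auto
        next
          case zp: False
          define d where "d = z - p"
          have d0: "d \<noteq> 0" using zp by (simp add: d_def)
          have "card (R d) = 1" unfolding R_def P_def by (rule ray[rule_format, OF d0])
          then obtain w where w: "R d = {w}" by (rule card_1_singletonE)
          hence "w \<in> R d" by simp
          then obtain t where t: "t \<ge> 0" "w = p + t *\<^sub>R d" "w \<in> P" unfolding R_def by blast
          obtain \<tau> where tK: "\<tau> \<in> K" and wt: "w \<in> convex hull (x ` \<tau>)" using Pcases[OF t(3)] by blast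
          have t0: "t \<noteq> 0" using t False by auto
          have "z = p + (1 / t) *\<^sub>R (w - p)" using t(2) t0 by (simp add: d_def)
          moreover have "1 / t \<ge> 0" using t(1) by simp
          ultimately have "z \<in> C \<tau>" using wt unfolding C_def by blast
          thus ?thesis using tK by blast
        qed
      qed
      have far: "\<And>\<tau>. \<tau> \<in> K \<Longrightarrow> v \<notin> \<tau> \<Longrightarrow> x v \<notin> C \<tau>"
      proof
        fix \<tau> assume tK: "\<tau> \<in> K" and vt: "v \<notin> \<tau>" and xC: "x v \<in> C \<tau>"
        then obtain t y where t: "0 \<le> t" "y \<in> convex hull (x ` \<tau>)" "x v = p + t *\<^sub>R (y - p)"
          unfolding C_def by blast
        have yP: "y \<in> P" by (rule inP[OF tK t(2)])
        have d0: "y - p \<noteq> 0" using yP False by auto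
        have yR: "y \<in> R (y - p)" using Rin[of 1 "y - p"] yP by simp
        have xR: "x v \<in> R (y - p)" using Rin[of t "y - p"] t xP[OF v] by simp
        have "y = x v" by (rule ray1[OF d0 yR xR])
        hence "x v \<in> convex hull (x ` \<tau>) \<inter> convex hull (x ` {v})" using t(2) by (simp add: hull_inc)
        also have "\<dots> = convex hull (x ` (\<tau> \<inter> {v}))" by (rule grB[OF tK sing[OF v]])
        also have "\<tau> \<inter> {v} = {}" using vt by auto
        finally show False by simp
      qed
      have closedC: "\<And>\<tau>. \<tau> \<in> K \<Longrightarrow> closed (C \<tau>)"
      proof -
        fix \<tau> assume tK: "\<tau> \<in> K"
        define S where "S = (\<lambda>y. y - p) ` (convex hull (x ` \<tau>))"
        have cS: "compact S" unfolding S_def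
          by (rule compact_translation_subtract, rule finite_imp_compact_convex_hull) (use fin[OF tK] in simp)
        have S0: "0 \<notin> S" using False inP[OF tK] by (auto simp: S_def)
        have "closed (conic hull S)" using closed_conic_hull cS S0 by blast
        hence cl: "closed ((+) p ` (conic hull S))" by (rule closed_translation)
        have "C \<tau> = (+) p ` (conic hull S)"
        proof
          show "C \<tau> \<subseteq> (+) p ` (conic hull S)"
          proof
            fix z assume "z \<in> C \<tau>"
            then obtain t y where t: "0 \<le> t" "y \<in> convex hull (x ` \<tau>)" "z = p + t *\<^sub>R (y - p)"
              unfolding C_def by blast
            have "y - p \<in> S" using t(2) by (simp add: S_def)
            hence "t *\<^sub>R (y - p) \<in> conic hull S" using t(1) unfolding conic_hull_explicit by blast
            thus "z \<in> (+) p ` (conic hull S)" using t(3) by blast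
          qed
          show "(+) p ` (conic hull S) \<subseteq> C \<tau>"
          proof
            fix z assume "z \<in> (+) p ` (conic hull S)"
            then obtain w where w: "w \<in> conic hull S" "z = p + w" by blast
            then obtain c u where cu: "0 \<le> c" "u \<in> S" "w = c *\<^sub>R u" unfolding conic_hull_explicit by blast
            then obtain y where y: "y \<in> convex hull (x ` \<tau>)" "u = y - p" unfolding S_def by blast
            show "z \<in> C \<tau>" unfolding C_def using cu y w by blast
          qed
        qed
        thus "closed (C \<tau>)" using cl by simp
      qed
      define U where "U = - (\<Union>\<tau>\<in>{\<tau>\<in>K. v \<notin> \<tau>}. C \<tau>)"
      have oU: "open U" unfolding U_def using Kfin closedC
        by (intro open_Compl closed_UN) auto
      have xU: "x v \<in> U" unfolding U_def using far by blast
      obtain e where e: "e > 0" "ball (x v) e \<subseteq> U" using open_contains_ball[of U] oU xU by blast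
      have bsub: "ball (x v) e \<subseteq> (\<Union>\<tau>\<in>{\<tau>\<in>K. v \<in> \<tau>}. C \<tau>)"
      proof
        fix z assume z: "z \<in> ball (x v) e"
        obtain \<tau> where tK: "\<tau> \<in> K" and zt: "z \<in> C \<tau>" using cover by blast
        have "v \<in> \<tau>"
        proof (rule ccontr)
          assume "v \<notin> \<tau>"
          hence "z \<notin> U" unfolding U_def using tK zt by blast
          thus False using z e(2) by blast
        qed
        thus "z \<in> (\<Union>\<tau>\<in>{\<tau>\<in>K. v \<in> \<tau>}. C \<tau>)" using tK zt by blast
      qed
      have negC: "\<And>\<tau>. \<tau> \<in> K \<Longrightarrow> v \<in> \<tau> \<Longrightarrow> negligible (C \<tau>)"
      proof -
        fix \<tau> assume tK: "\<tau> \<in> K" and vt: "v \<in> \<tau>"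
        define S' where "S' = (\<lambda>y. (- p) + y) ` (x ` \<tau>)"
        have fS': "finite S'" using fin[OF tK] by (simp add: S'_def)
        have "card S' \<le> card (x ` \<tau>)" unfolding S'_def by (rule card_image_le) (use fin[OF tK] in simp)
        also have "card (x ` \<tau>) \<le> card \<tau>" by (rule card_image_le[OF fin[OF tK]])
        finally have "card S' \<le> card \<tau>" .
        hence "dim S' < DIM('e)" using dim_le_card'[OF fS'] small[OF tK vt] dimE by linarith
        hence "dim (span S') < DIM('e)" by simp
        hence ng: "negligible ((+) p ` span S')" by (intro negligible_translation negligible_lowdim)
        have "C \<tau> \<subseteq> (+) p ` span S'"
        proof
          fix z assume "z \<in> C \<tau>"
          then obtain t y where t: "0 \<le> t" "y \<in> convex hull (x ` \<tau>)" "z = p + t *\<^sub>R (y - p)"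
            unfolding C_def by blast
          have "(- p) + y \<in> (\<lambda>y. (- p) + y) ` (convex hull (x ` \<tau>))" using t(2) by blast
          also have "\<dots> = convex hull S'" unfolding S'_def by (rule convex_hull_translation[symmetric])
          also have "\<dots> \<subseteq> span S'" by (rule convex_hull_subset_span)
          finally have "y - p \<in> span S'" by simp
          hence "t *\<^sub>R (y - p) \<in> span S'" by (rule span_mul)
          thus "z \<in> (+) p ` span S'" using t(3) by blast
        qed
        thus "negligible (C \<tau>)" using ng negligible_subset by blast
      qed
      have "negligible (\<Union>\<tau>\<in>{\<tau>\<in>K. v \<in> \<tau>}. C \<tau>)"
        using Kfin negC by (intro negligible_Union) auto
      hence "negligible (ball (x v) e)" using bsub negligible_subset by blast
      moreover have "interior (ball (x v) e) \<noteq> {}" using e(1) by simp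
      ultimately show False using negligible_convex_interior[of "ball (x v) e"] by simp
    qed
  qed
  show ?thesis using T1 T2 by blast
qed


lemma generic:
  fixes l1 l2 :: "'a::comm_ring_1 mat"
  assumes dimE: "DIM('e::euclidean_space) = n" and ss: "star_shaped_sphere TYPE('e) m K" and v: "v < m"
    and c1: "char_map n m K l1" and c2: "char_map n m K l2"
  shows "pre_edge n m K v l1 l2 \<longleftrightarrow> Pr_equiv n l1 l2 v"
proof -
  have sc: "simplicial_complex_on m K" using ss unfolding star_shaped_sphere_def by (rule conjunct1)
  have T: "(\<forall>\<sigma>\<in>K. card \<sigma> \<le> n) \<and> (\<exists>\<rho>\<in>K. v \<in> \<rho> \<and> card \<rho> = n)" by (rule topo[OF dimE ss v])
  obtain \<rho> where rho: "\<rho> \<in> K" "v \<in> \<rho>" "card \<rho> = n" using T by blast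
  have "n \<ge> 1" using dimE DIM_positive[where 'a='e] by simp
  then obtain n0 where n0: "n = Suc n0" by (cases n) auto
  show ?thesis
  proof
    assume pe: "pre_edge n m K v l1 l2"
    show "Pr_equiv n l1 l2 v"
      using part2[OF sc rho(1,2) _ v, of n0 l1 l2] rho(3) c1 c2 pe n0 by simp
  next
    assume pr: "Pr_equiv n l1 l2 v"
    show "pre_edge n m K v l1 l2"
      using part1[OF sc _ v, of n0 l1 l2] T c1 c2 pr n0 by simp
  qed
qed

theorem mainTheorem4:
  fixes n m v :: nat and K :: "nat set set"
  assumes "DIM('e::euclidean_space) = n"
    and "star_shaped_sphere TYPE('e) m K"
    and "v < m"
  shows "(\<forall>l1 l2 :: int mat. char_map n m K l1 \<and> char_map n m K l2 \<longrightarrow>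
            (pre_edge n m K v l1 l2 \<longleftrightarrow> Pr_equiv n l1 l2 v)) \<and>
         (\<forall>l1 l2 :: bit mat. char_map n m K l1 \<and> char_map n m K l2 \<longrightarrow>
            (pre_edge n m K v l1 l2 \<longleftrightarrow> Pr_equiv n l1 l2 v))"
proof (intro conjI allI impI)
  fix l1 l2 :: "int mat" assume "char_map n m K l1 \<and> char_map n m K l2"
  thus "pre_edge n m K v l1 l2 \<longleftrightarrow> Pr_equiv n l1 l2 v"
    using generic[OF assms(1,2,3), of l1 l2] by blast
next
  fix l1 l2 :: "bit mat" assume "char_map n m K l1 \<and> char_map n m K l2"
  thus "pre_edge n m K v l1 l2 \<longleftrightarrow> Pr_equiv n l1 l2 v"
    using generic[OF assms(1,2,3), of l1 l2] by blast
qed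

end
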